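(* In the relatively free algebra $R=\mathbb{K}\langle Y\cup Z\rangle/I$, the image of every $Y$-proper polynomial is a linear combination of the images of polynomials $g_K=h(y_{i_1},\dots,y_{i_{2m+n}},z_{j_1},\dots,z_{j_{n+2r}})\,z_{k_1}\cdots z_{k_q}$ with $m,n,r,q\ge0$, $i_1<i_2<\dots<i_{2m+n}$, $j_1\le\dots\le j_{n+2r}$ and $k_1<\dots<k_q$.
   Context: $\mathbb{K}$ is an infinite field of characteristic different from $2$. $\mathbb{K}\langle Y\cup Z\rangle$ is the free associative algebra on disjoint countable sets $Y=\{y_1,y_2,\dots\}$ (degree $0$) and $Z=\{z_1,z_2,\dots\}$ (degree $1$). Notation: $[a,b]=ab-ba$, $[a_1,\dots,a_n]=[[a_1,\dots,a_{n-1}],a_n]$, $a\circ b=ab+ba$. A polynomial is $Y$-proper if it lies in the subalgebra of $\mathbb{K}\langle Y\cup Z\rangle$ generated by $Z$ and all commutators $[x_1,\dots,x_s]$, $s\ge2$, of variables $x_i\in Y\cup Z$. A $T_2$-ideal is an ideal of $\mathbb{K}\langle Y\cup Z\rangle$ stable under all graded endomorphisms (those sending each $y_i$ to a polynomial of degree $0$ and each $z_i$ to one of degree $1$). $I$ is the $T_2$-ideal generated by: (1) $[y_1,y_2,y_3]$, $[y_1,y_2,z_3]$; (2) $[y_1,z_2,y_3]$; (3) $[y_1,z_2]\circ z_3$; (4) $[z_1\circ z_2,z_3]$; (5) $(z_1\circ z_2)(z_3\circ z_4)-(z_1\circ z_3)(z_2\circ z_4)$; (6) $[x_1,y_2][y_3,x_4]+[x_1,y_3][y_2,x_4]$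 for all choices $x_1\in\{y_1,z_1\}$, $x_4\in\{y_4,z_4\}$; (7) $[y_1,z_2](z_3\circ z_4)-[y_1,z_3](z_2\circ z_4)$. For indices as indicated, $h(y_{i_1},\dots,y_{i_{2m+n}},z_{j_1},\dots,z_{j_{n+2r}})=[y_{i_1},y_{i_2}]\cdots[y_{i_{2m-1}},y_{i_{2m}}]\cdot[y_{i_{2m+1}},z_{j_1}]\cdots[y_{i_{2m+n}},z_{j_n}]\cdot(z_{j_{n+1}}\circ z_{j_{n+2}})\cdots(z_{j_{n+2r-1}}\circ z_{j_{n+2r}})$ (empty products equal $1$). *)

theory Defs
  imports "HOL-Library.Poly_Mapping"
begin

text \<open>Variables: y_i (degree 0) and z_i (degree 1).\<close>
datatype var = Yv nat | Zv nat

type_synonym 'k fpoly = "var list \<Rightarrow>\<^sub>0 'k"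

definition fconst :: "'k::field \<Rightarrow> 'k fpoly" where
  "fconst c = Poly_Mapping.single [] c"

definition fone :: "'k::field fpoly" where
  "fone = fconst 1"

definition fvar :: "var \<Rightarrow> 'k::field fpoly" where
  "fvar x = Poly_Mapping.single [x] 1"

definition fsmult :: "'k::field \<Rightarrow> 'k fpoly \<Rightarrow> 'k fpoly" where
  "fsmult c p = Poly_Mapping.map (\<lambda>a. c * a) p"

definition fmul :: "'k::field fpoly \<Rightarrow> 'k fpoly \<Rightarrow> 'k fpoly" where
  "fmul p q = (\<Sum>(u, v) \<in> Poly_Mapping.keys p \<times> Poly_Mapping.keys q.
                 Poly_Mapping.single (u @ v) (Poly_Mapping.lookup p u * Poly_Mapping.lookup q v))"

definition fprod :: "'k::field fpoly list \<Rightarrow> 'k fpoly" where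
  "fprod ps = foldr fmul ps fone"

definition comm :: "'k::field fpoly \<Rightarrow> 'k fpoly \<Rightarrow> 'k fpoly" where
  "comm a b = fmul a b - fmul b a"

definition jordan :: "'k::field fpoly \<Rightarrow> 'k fpoly \<Rightarrow> 'k fpoly" where
  "jordan a b = fmul a b + fmul b a"

definition lcomm :: "var \<Rightarrow> var list \<Rightarrow> 'k::field fpoly" where
  "lcomm x xs = foldl (\<lambda>a y. comm a (fvar y)) (fvar x) xs"

definition zcount :: "var list \<Rightarrow> nat" where
  "zcount w = length (filter (\<lambda>x. case x of Zv _ \<Rightarrow> True | Yv _ \<Rightarrow> False) w)"

text \<open>p is homogeneous of degree d (d = 0 or 1, the Z_2-degree).\<close>
definition homog :: "bool \<Rightarrow> 'k::field fpoly \<Rightarrow> bool" where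
  "homog d p \<longleftrightarrow> (\<forall>w \<in> Poly_Mapping.keys p. odd (zcount w) = d)"

definition graded_subst :: "(var \<Rightarrow> 'k::field fpoly) \<Rightarrow> bool" where
  "graded_subst \<sigma> \<longleftrightarrow> (\<forall>i. homog False (\<sigma> (Yv i))) \<and> (\<forall>i. homog True (\<sigma> (Zv i)))"

definition subst :: "(var \<Rightarrow> 'k::field fpoly) \<Rightarrow> 'k fpoly \<Rightarrow> 'k fpoly" where
  "subst \<sigma> p = (\<Sum>w \<in> Poly_Mapping.keys p. fsmult (Poly_Mapping.lookup p w) (fprod (map \<sigma> w)))"

inductive_set T2_ideal :: "'k::field fpoly set \<Rightarrow> 'k fpoly set" for S where
  gen: "s \<in> S \<Longrightarrow> s \<in> T2_ideal S"
| zero: "0 \<in> T2_ideal S"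
| add: "p \<in> T2_ideal S \<Longrightarrow> q \<in> T2_ideal S \<Longrightarrow> p + q \<in> T2_ideal S"
| smult: "p \<in> T2_ideal S \<Longrightarrow> fsmult c p \<in> T2_ideal S"
| mult_left: "p \<in> T2_ideal S \<Longrightarrow> fmul a p \<in> T2_ideal S"
| mult_right: "p \<in> T2_ideal S \<Longrightarrow> fmul p a \<in> T2_ideal S"
| endo: "p \<in> T2_ideal S \<Longrightarrow> graded_subst \<sigma> \<Longrightarrow> subst \<sigma> p \<in> T2_ideal S"

definition y :: "nat \<Rightarrow> 'k::field fpoly" where "y i = fvar (Yv i)"
definition z :: "nat \<Rightarrow> 'k::field fpoly" where "z i = fvar (Zv i)"

definition xvar :: "bool \<Rightarrow> nat \<Rightarrow> 'k::field fpoly" where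
  "xvar b i = (if b then z i else y i)"

text \<open>Generators (1)-(7) of I (with the fixed variable indices of the paper).\<close>
definition I_gens :: "'k::field fpoly set" where
  "I_gens =
    {comm (comm (y 1) (y 2)) (y 3), comm (comm (y 1) (y 2)) (z 3),
     comm (comm (y 1) (z 2)) (y 3),
     jordan (comm (y 1) (z 2)) (z 3),
     comm (jordan (z 1) (z 2)) (z 3),
     fmul (jordan (z 1) (z 2)) (jordan (z 3) (z 4))
       - fmul (jordan (z 1) (z 3)) (jordan (z 2) (z 4)),
     fmul (comm (y 1) (z 2)) (jordan (z 3) (z 4))
       - fmul (comm (y 1) (z 3)) (jordan (z 2) (z 4))}
   \<union> {fmul (comm (xvar b1 1) (y 2)) (comm (y 3) (xvar b4 4))
       + fmul (comm (xvar b1 1) (y 3)) (comm (y 2) (xvar b4 4)) | b1 b4. True}"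

definition I_ideal :: "'k::field fpoly set" where
  "I_ideal = T2_ideal I_gens"

inductive_set Y_proper :: "'k::field fpoly set" where
  const: "fconst c \<in> Y_proper"
| zvar: "fvar (Zv j) \<in> Y_proper"
| commutator: "xs \<noteq> [] \<Longrightarrow> lcomm x xs \<in> Y_proper"
| add: "p \<in> Y_proper \<Longrightarrow> q \<in> Y_proper \<Longrightarrow> p + q \<in> Y_proper"
| smult: "p \<in> Y_proper \<Longrightarrow> fsmult c p \<in> Y_proper"
| mult: "p \<in> Y_proper \<Longrightarrow> q \<in> Y_proper \<Longrightarrow> fmul p q \<in> Y_proper"

text \<open>h(y_{i_1},...,y_{i_{2m+n}}, z_{j_1},...,z_{j_{n+2r}}) with index lists is, js
  (0-based list positions).\<close>
definition hpoly :: "nat \<Rightarrow> nat \<Rightarrow> nat \<Rightarrow> nat list \<Rightarrow> nat list \<Rightarrow> 'k::field fpoly" where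
  "hpoly m n r is js =
     fmul (fprod (map (\<lambda>k. comm (y (is ! (2*k))) (y (is ! (2*k+1)))) [0..<m]))
      (fmul (fprod (map (\<lambda>k. comm (y (is ! (2*m+k))) (z (js ! k))) [0..<n]))
            (fprod (map (\<lambda>k. jordan (z (js ! (n+2*k))) (z (js ! (n+2*k+1)))) [0..<r])))"

definition gpoly :: "nat \<Rightarrow> nat \<Rightarrow> nat \<Rightarrow> nat list \<Rightarrow> nat list \<Rightarrow> nat list \<Rightarrow> 'k::field fpoly" where
  "gpoly m n r is js ks = fmul (hpoly m n r is js) (fprod (map z ks))"

definition G_set :: "'k::field fpoly set" where
  "G_set = {gpoly m n r is js ks | m n r is js ks.
              length is = 2*m + n \<and> sorted_wrt (<) is \<and>
              length js = n + 2*r \<and> sorted js \<and>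
              sorted_wrt (<) ks}"

end

theory Submission
  imports Defs
begin


instantiation list :: (type) monoid_add
begin
definition zero_list :: "'a list" where "zero_list = []"
definition plus_list :: "'a list \<Rightarrow> 'a list \<Rightarrow> 'a list" where "plus_list = (@)"
instance by standard (auto simp: zero_list_def plus_list_def)

end

lemma pm_expand: "(p::'a \<Rightarrow>\<^sub>0 'b::comm_monoid_add) = (\<Sum>u\<in>Poly_Mapping.keys p. Poly_Mapping.single u (Poly_Mapping.lookup p u))"
  by (rule poly_mapping_eqI) (simp add: lookup_sum lookup_single when_def in_keys_iff sum.delta' split: if_splits)

lemma fmul_eq: "fmul p q = p * q"
proof -
  have "p * q = (\<Sum>u\<in>Poly_Mapping.keys p. Poly_Mapping.single u (Poly_Mapping.lookup p u)) * (\<Sum>v\<in>Poly_Mapping.keys q. Poly_Mapping.single v (Poly_Mapping.lookup q v))"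
    using pm_expand[of p] pm_expand[of q] by simp
  also have "\<dots> = (\<Sum>u\<in>Poly_Mapping.keys p. \<Sum>v\<in>Poly_Mapping.keys q. Poly_Mapping.single (u@v) (Poly_Mapping.lookup p u * Poly_Mapping.lookup q v))"
    by (simp add: sum_distrib_left sum_distrib_right mult_single plus_list_def sum.swap[of _ "Poly_Mapping.keys q"])
  also have "\<dots> = fmul p q" unfolding fmul_def by (simp add: sum.cartesian_product)
  finally show ?thesis by simp
qed

lemma fone_eq: "fone = 1"
  by (simp add: fone_def fconst_def one_poly_mapping.abs_eq zero_list_def[symmetric] single.abs_eq)

lemma fsmult_eq: "fsmult c p = Poly_Mapping.single [] c * p"
  unfolding fsmult_def using mult_map_scale_conv_mult[of c p] by (simp add: zero_list_def)

lemma fprod_eq: "fprod ps = prod_list ps"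
  unfolding fprod_def by (induct ps) (simp_all add: fone_eq fmul_eq)

lemma comm_eq: "comm a b = a * b - b * a" by (simp add: comm_def fmul_eq)
lemma jordan_eq: "jordan a b = a * b + b * a" by (simp add: jordan_def fmul_eq)

lemma single_nil_comm: "Poly_Mapping.single [] c * p = p * Poly_Mapping.single [] (c::'k::field)"
proof -
  have "Poly_Mapping.single [] c * p = (\<Sum>u\<in>Poly_Mapping.keys p. Poly_Mapping.single [] c * Poly_Mapping.single u (Poly_Mapping.lookup p u))"
    by (subst pm_expand[of p]) (simp add: sum_distrib_left)
  also have "\<dots> = (\<Sum>u\<in>Poly_Mapping.keys p. Poly_Mapping.single u (Poly_Mapping.lookup p u) * Poly_Mapping.single [] c)"
    by (simp add: mult_single plus_list_def mult.commute)
  also have "\<dots> = p * Poly_Mapping.single [] c"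
    by (subst (2) pm_expand[of p]) (simp add: sum_distrib_right)
  finally show ?thesis .
qed

lemma I_add: "p \<in> I_ideal \<Longrightarrow> q \<in> I_ideal \<Longrightarrow> p + q \<in> I_ideal"
  unfolding I_ideal_def by (rule T2_ideal.add)
lemma I_zero: "0 \<in> I_ideal" unfolding I_ideal_def by (rule T2_ideal.zero)
lemma I_multl: "p \<in> I_ideal \<Longrightarrow> a * p \<in> I_ideal"
  unfolding I_ideal_def using T2_ideal.mult_left[of p _ a] by (simp add: fmul_eq)
lemma I_multr: "p \<in> I_ideal \<Longrightarrow> p * a \<in> I_ideal"
  unfolding I_ideal_def using T2_ideal.mult_right[of p _ a] by (simp add: fmul_eq)
lemma I_neg: "p \<in> I_ideal \<Longrightarrow> - p \<in> I_ideal"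
  using I_multl[of p "- 1"] by simp
lemma I_diff: "p \<in> I_ideal \<Longrightarrow> q \<in> I_ideal \<Longrightarrow> p - q \<in> I_ideal"
  using I_add[of p "-q"] I_neg[of q] by simp

definition Irel :: "'k::field fpoly \<Rightarrow> 'k fpoly \<Rightarrow> bool" where
  "Irel p q \<longleftrightarrow> p - q \<in> I_ideal"

lemma equivp_Irel: "equivp Irel"
proof (rule equivpI)
  show "reflp Irel" by (simp add: reflp_def Irel_def I_zero)
  show "symp Irel" unfolding symp_def Irel_def using I_neg by fastforce
  show "transp Irel" unfolding transp_def Irel_def using I_add by fastforce
qed

quotient_type (overloaded) 'k R = "'k::field fpoly" / Irel
  by (rule equivp_Irel)

instantiation R :: (field) "{ring, monoid_mult}"
begin
lift_definition zero_R :: "'a R" is "0" .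
lift_definition one_R :: "'a R" is "1" .
lift_definition plus_R :: "'a R \<Rightarrow> 'a R \<Rightarrow> 'a R" is "(+)"
  unfolding Irel_def by (drule (1) I_add) (simp add: algebra_simps)
lift_definition uminus_R :: "'a R \<Rightarrow> 'a R" is "uminus"
  unfolding Irel_def by (drule I_neg) (simp add: algebra_simps)
lift_definition minus_R :: "'a R \<Rightarrow> 'a R \<Rightarrow> 'a R" is "(-)"
  unfolding Irel_def by (drule (1) I_diff) (simp add: algebra_simps)
lift_definition times_R :: "'a R \<Rightarrow> 'a R \<Rightarrow> 'a R" is "(*)"
proof -
  fix p1 p2 q1 q2 :: "'a fpoly"
  assume "Irel p1 p2" "Irel q1 q2"
  then have "(p1 - p2) * q1 + p2 * (q1 - q2) \<in> I_ideal"
    unfolding Irel_def by (intro I_add I_multr I_multl)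
  then show "Irel (p1 * q1) (p2 * q2)" unfolding Irel_def by (simp add: algebra_simps)
qed
instance
  apply standard
  apply (transfer, simp add: Irel_def I_zero algebra_simps)+
  done

end


section \<open>Substitution is a homomorphism\<close>

abbreviation S1 :: "'k::field \<Rightarrow> 'k fpoly" where "S1 c \<equiv> Poly_Mapping.single [] c"

lemma S1_mult: "S1 a * S1 b = S1 (a * b)"
  by (simp add: mult_single plus_list_def)
lemma S1_add: "S1 a + S1 b = S1 (a + b)"
  by (simp add: single_add)

lemma subst_eq: "subst \<sigma> p = (\<Sum>w\<in>Poly_Mapping.keys p. S1 (Poly_Mapping.lookup p w) * prod_list (map \<sigma> w))"
  unfolding subst_def by (simp add: fsmult_eq fprod_eq)

lemma subst_superset:
  assumes "finite A" "Poly_Mapping.keys p \<subseteq> A"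
  shows "subst \<sigma> p = (\<Sum>w\<in>A. S1 (Poly_Mapping.lookup p w) * prod_list (map \<sigma> w))"
  unfolding subst_eq
  by (rule sum.mono_neutral_left) (use assms in \<open>auto simp: in_keys_iff\<close>)

lemma subst_add: "subst \<sigma> (p + q) = subst \<sigma> p + subst \<sigma> q"
proof -
  let ?A = "Poly_Mapping.keys p \<union> Poly_Mapping.keys q"
  have f: "finite ?A" by simp
  have "subst \<sigma> (p + q) = (\<Sum>w\<in>?A. S1 (Poly_Mapping.lookup (p+q) w) * prod_list (map \<sigma> w))"
    by (rule subst_superset[OF f]) (simp add: keys_add)
  also have "\<dots> = (\<Sum>w\<in>?A. S1 (Poly_Mapping.lookup p w) * prod_list (map \<sigma> w)) + (\<Sum>w\<in>?A. S1 (Poly_Mapping.lookup q w) * prod_list (map \<sigma> w))"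
    by (simp add: lookup_add S1_add[symmetric] distrib_right sum.distrib)
  also have "\<dots> = subst \<sigma> p + subst \<sigma> q"
    by (simp add: subst_superset[OF f, symmetric])
  finally show ?thesis .
qed

lemma subst_zero: "subst \<sigma> 0 = 0" by (simp add: subst_eq)

lemma subst_neg: "subst \<sigma> (- p) = - subst \<sigma> p"
  using subst_add[of \<sigma> p "-p"] by (simp add: subst_zero) (metis add.inverse_unique)

lemma subst_diff: "subst \<sigma> (p - q) = subst \<sigma> p - subst \<sigma> q"
  using subst_add[of \<sigma> p "-q"] by (simp add: subst_neg)

lemma subst_sum: "finite A \<Longrightarrow> subst \<sigma> (\<Sum>a\<in>A. f a) = (\<Sum>a\<in>A. subst \<sigma> (f a))"
  by (induct A rule: finite_induct) (simp_all add: subst_zero subst_add)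

lemma subst_single: "subst \<sigma> (Poly_Mapping.single u a) = S1 a * prod_list (map \<sigma> u)"
  by (cases "a = 0") (simp_all add: subst_eq)

lemma S1_comm: "S1 c * p = p * S1 (c::'k::field)"
  by (rule single_nil_comm)

lemma subst_mult: "subst \<sigma> (p * q) = subst \<sigma> p * subst \<sigma> q"
proof -
  let ?P = "Poly_Mapping.keys p" and ?Q = "Poly_Mapping.keys q"
  have "p * q = (\<Sum>u\<in>?P. Poly_Mapping.single u (Poly_Mapping.lookup p u)) * (\<Sum>v\<in>?Q. Poly_Mapping.single v (Poly_Mapping.lookup q v))"
    using pm_expand[of p] pm_expand[of q] by simp
  also have "\<dots> = (\<Sum>u\<in>?P. \<Sum>v\<in>?Q. Poly_Mapping.single (u@v) (Poly_Mapping.lookup p u * Poly_Mapping.lookup q v))"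
    by (simp add: sum_distrib_left sum_distrib_right mult_single plus_list_def sum.swap[of _ "Poly_Mapping.keys q"])
  finally have pq: "subst \<sigma> (p * q) = (\<Sum>u\<in>?P. \<Sum>v\<in>?Q. S1 (Poly_Mapping.lookup p u * Poly_Mapping.lookup q v) * prod_list (map \<sigma> (u@v)))"
    by (simp add: subst_sum subst_single)
  have "\<And>u v. S1 (Poly_Mapping.lookup p u * Poly_Mapping.lookup q v) * prod_list (map \<sigma> (u@v))
     = (S1 (Poly_Mapping.lookup p u) * prod_list (map \<sigma> u)) * (S1 (Poly_Mapping.lookup q v) * prod_list (map \<sigma> v))"
  proof -
    fix u v
    have "(S1 (Poly_Mapping.lookup p u) * prod_list (map \<sigma> u)) * (S1 (Poly_Mapping.lookup q v) * prod_list (map \<sigma> v))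
      = S1 (Poly_Mapping.lookup p u) * (prod_list (map \<sigma> u) * S1 (Poly_Mapping.lookup q v)) * prod_list (map \<sigma> v)"
      by (simp add: mult.assoc)
    also have "\<dots> = S1 (Poly_Mapping.lookup p u) * (S1 (Poly_Mapping.lookup q v) * prod_list (map \<sigma> u)) * prod_list (map \<sigma> v)"
      by (simp add: S1_comm)
    also have "\<dots> = S1 (Poly_Mapping.lookup p u * Poly_Mapping.lookup q v) * prod_list (map \<sigma> (u@v))"
      by (simp add: mult.assoc S1_mult[symmetric])
    finally show "?thesis u v" by simp
  qed
  then have "subst \<sigma> p * subst \<sigma> q = (\<Sum>u\<in>?P. \<Sum>v\<in>?Q. S1 (Poly_Mapping.lookup p u * Poly_Mapping.lookup q v) * prod_list (map \<sigma> (u@v)))"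
    unfolding subst_eq[of _ p] subst_eq[of _ q]
    by (simp add: sum_distrib_left sum_distrib_right sum.swap[of _ "Poly_Mapping.keys q"])
  then show ?thesis using pq by simp
qed

lemma S1_one: "S1 1 = 1" by (metis fone_eq fone_def fconst_def)

lemma subst_fvar: "subst \<sigma> (fvar x) = \<sigma> x"
  by (simp add: fvar_def subst_single S1_one)

definition ren :: "(nat \<Rightarrow> nat) \<Rightarrow> (nat \<Rightarrow> nat) \<Rightarrow> var \<Rightarrow> 'k::field fpoly" where
  "ren f g v = (case v of Yv i \<Rightarrow> fvar (Yv (f i)) | Zv i \<Rightarrow> fvar (Zv (g i)))"

lemma graded_ren: "graded_subst (ren f g)"
  by (simp add: graded_subst_def homog_def ren_def fvar_def zcount_def)

lemma ren_I: "p \<in> I_gens \<Longrightarrow> subst (ren f g) p \<in> I_ideal"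
  unfolding I_ideal_def by (rule T2_ideal.endo[OF T2_ideal.gen graded_ren])

section \<open>The quotient ring\<close>

definition Y :: "nat \<Rightarrow> 'k::field R" where "Y i = abs_R (y i)"
definition Z :: "nat \<Rightarrow> 'k::field R" where "Z i = abs_R (z i)"
definition sc :: "'k::field \<Rightarrow> 'k R" where "sc c = abs_R (S1 c)"
definition cm :: "'a::ring \<Rightarrow> 'a \<Rightarrow> 'a" where "cm a b = a * b - b * a"
definition jd :: "'a::ring \<Rightarrow> 'a \<Rightarrow> 'a" where "jd a b = a * b + b * a"

lemma abs_add: "abs_R (p + q) = abs_R p + abs_R q" by (simp add: plus_R.abs_eq)
lemma abs_diff: "abs_R (p - q) = abs_R p - abs_R q" by (simp add: minus_R.abs_eq)
lemma abs_mult: "abs_R (p * q) = abs_R p * abs_R q" by (simp add: times_R.abs_eq)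
lemma abs_zero: "abs_R 0 = 0" by (simp add: zero_R.abs_eq)
lemma abs_one: "abs_R 1 = 1" by (simp add: one_R.abs_eq)
lemma abs_I: "p \<in> I_ideal \<Longrightarrow> abs_R p = 0"
  by (metis R.abs_eq_iff Irel_def abs_zero diff_zero)

lemma gen_rel: "p \<in> I_gens \<Longrightarrow> abs_R (subst (ren f g) p) = 0"
  by (rule abs_I[OF ren_I])

lemmas abs_hom = abs_add abs_diff abs_mult subst_add subst_diff subst_mult subst_fvar comm_eq jordan_eq
   y_def z_def Y_def[symmetric] Z_def[symmetric] ren_def xvar_def

lemma sc_mult: "sc a * sc b = sc (a * b)" by (simp add: sc_def abs_mult[symmetric] S1_mult)
lemma sc_add: "sc a + sc b = sc (a + b)" by (simp add: sc_def abs_add[symmetric] S1_add)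
lemma sc_comm: "sc c * x = x * sc c"
  by (induct x) (simp add: sc_def abs_mult[symmetric] S1_comm)
lemma sc_one: "sc 1 = 1" by (simp add: sc_def abs_one[symmetric] S1_one)
lemma sc_zero: "sc 0 = 0" by (simp add: sc_def abs_zero)


lemma abs_Y: "abs_R (fvar (Yv i)) = Y i" by (simp add: Y_def y_def)
lemma abs_Z: "abs_R (fvar (Zv i)) = Z i" by (simp add: Z_def z_def)

definition XV :: "bool \<Rightarrow> nat \<Rightarrow> 'k::field R" where "XV b i = (if b then Z i else Y i)"

definition rf :: "nat \<Rightarrow> nat \<Rightarrow> nat \<Rightarrow> nat \<Rightarrow> nat \<Rightarrow> nat" where
  "rf a b c d i = (if i = 1 then a else if i = 2 then b else if i = 3 then c else d)"

lemmas relsimps = abs_add abs_diff abs_mult subst_add subst_diff subst_mult subst_fvar comm_eq jordan_eq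
   y_def z_def ren_def xvar_def abs_Y abs_Z rf_def cm_def jd_def

lemma R1a: "cm (cm (Y a) (Y b)) (Y c) = (0::'k::field R)"
proof -
  have "abs_R (subst (ren (rf a b c d) (rf a b c d)) (comm (comm (y 1) (y 2)) (y 3)::'k fpoly)) = 0"
    by (rule gen_rel) (simp add: I_gens_def)
  then show ?thesis by (simp add: relsimps)
qed

lemma R1b: "cm (cm (Y a) (Y b)) (Z c) = (0::'k::field R)"
proof -
  have "abs_R (subst (ren (rf a b c d) (rf a b c d)) (comm (comm (y 1) (y 2)) (z 3)::'k fpoly)) = 0"
    by (rule gen_rel) (simp add: I_gens_def)
  then show ?thesis by (simp add: relsimps)
qed

lemma R2: "cm (cm (Y a) (Z b)) (Y c) = (0::'k::field R)"
proof -
  have "abs_R (subst (ren (rf a b c d) (rf a b c d)) (comm (comm (y 1) (z 2)) (y 3)::'k fpoly)) = 0"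
    by (rule gen_rel) (simp add: I_gens_def)
  then show ?thesis by (simp add: relsimps)
qed

lemma R3: "jd (cm (Y a) (Z b)) (Z c) = (0::'k::field R)"
proof -
  have "abs_R (subst (ren (rf a b c d) (rf a b c d)) (jordan (comm (y 1) (z 2)) (z 3)::'k fpoly)) = 0"
    by (rule gen_rel) (simp add: I_gens_def)
  then show ?thesis by (simp add: relsimps)
qed

lemma R4: "cm (jd (Z a) (Z b)) (Z c) = (0::'k::field R)"
proof -
  have "abs_R (subst (ren (rf a b c d) (rf a b c d)) (comm (jordan (z 1) (z 2)) (z 3)::'k fpoly)) = 0"
    by (rule gen_rel) (simp add: I_gens_def)
  then show ?thesis by (simp add: relsimps)
qed

lemma R5: "jd (Z a) (Z b) * jd (Z c) (Z d) = (jd (Z a) (Z c) * jd (Z b) (Z d) :: 'k::field R)"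
proof -
  have "abs_R (subst (ren (rf a b c d) (rf a b c d)) (fmul (jordan (z 1) (z 2)) (jordan (z 3) (z 4))
       - fmul (jordan (z 1) (z 3)) (jordan (z 2) (z 4)) ::'k fpoly)) = 0"
    by (rule gen_rel) (simp add: I_gens_def)
  then show ?thesis by (simp add: relsimps fmul_eq)
qed

lemma R7: "cm (Y a) (Z b) * jd (Z c) (Z d) = (cm (Y a) (Z c) * jd (Z b) (Z d) :: 'k::field R)"
proof -
  have "abs_R (subst (ren (rf a b c d) (rf a b c d)) (fmul (comm (y 1) (z 2)) (jordan (z 3) (z 4))
       - fmul (comm (y 1) (z 3)) (jordan (z 2) (z 4)) ::'k fpoly)) = 0"
    by (rule gen_rel) (simp add: I_gens_def)
  then show ?thesis by (simp add: relsimps fmul_eq)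
qed

lemma R6: "cm (XV b1 a) (Y b) * cm (Y c) (XV b4 d) + cm (XV b1 a) (Y c) * cm (Y b) (XV b4 d) = (0 :: 'k::field R)"
proof -
  have "abs_R (subst (ren (rf a b c d) (rf a b c d)) (fmul (comm (xvar b1 1) (y 2)) (comm (y 3) (xvar b4 4))
       + fmul (comm (xvar b1 1) (y 3)) (comm (y 2) (xvar b4 4)) ::'k fpoly)) = 0"
    by (rule gen_rel) (auto simp: I_gens_def)
  then show ?thesis by (cases b1; cases b4) (simp_all add: relsimps fmul_eq XV_def)
qed





definition swapl :: "nat \<Rightarrow> 'a list \<Rightarrow> 'a list" where
  "swapl p xs = xs[p := xs ! Suc p, Suc p := xs ! p]"

definition anti :: "('b list \<Rightarrow> 'a::ab_group_add) \<Rightarrow> nat \<Rightarrow> bool" where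
  "anti f n \<longleftrightarrow> (\<forall>xs p. length xs = n \<longrightarrow> Suc p < n \<longrightarrow> f (swapl p xs) = - f xs)"

definition symm :: "('b list \<Rightarrow> 'a) \<Rightarrow> nat \<Rightarrow> bool" where
  "symm f n \<longleftrightarrow> (\<forall>xs p. length xs = n \<longrightarrow> Suc p < n \<longrightarrow> f (swapl p xs) = f xs)"

lemma swapl_Cons: "swapl (Suc p) (a # ys) = a # swapl p ys"
  by (simp add: swapl_def)

lemma swapl_0: "swapl 0 (a # b # ys) = b # a # ys"
  by (simp add: swapl_def)

lemma length_swapl[simp]: "length (swapl p xs) = length xs"
  by (simp add: swapl_def)

lemma nth_swapl: "Suc p < length xs \<Longrightarrow> swapl p xs ! i = (if i = p then xs ! Suc p else if i = Suc p then xs ! p else xs ! i)"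
  by (simp add: swapl_def nth_list_update)

lemma anti_Cons: "anti f (Suc n) \<Longrightarrow> anti (\<lambda>ys. f (a # ys)) n"
  unfolding anti_def
proof (intro allI impI)
  fix xs p assume A: "\<forall>xs p. length xs = Suc n \<longrightarrow> Suc p < Suc n \<longrightarrow> f (swapl p xs) = - f xs"
    and l: "length (xs::'a list) = n" and p: "Suc p < n"
  show "f (a # swapl p xs) = - f (a # xs)"
    using A[rule_format, of "a # xs" "Suc p"] l p by (simp add: swapl_Cons)
qed

lemma symm_Cons: "symm f (Suc n) \<Longrightarrow> symm (\<lambda>ys. f (a # ys)) n"
  unfolding symm_def
proof (intro allI impI)
  fix xs p assume A: "\<forall>xs p. length xs = Suc n \<longrightarrow> Suc p < Suc n \<longrightarrow> f (swapl p xs) = f xs"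
    and l: "length (xs::'a list) = n" and p: "Suc p < n"
  show "f (a # swapl p xs) = f (a # xs)"
    using A[rule_format, of "a # xs" "Suc p"] l p by (simp add: swapl_Cons)
qed

lemma anti_insort:
  "anti f (Suc (length s)) \<Longrightarrow> sorted s \<Longrightarrow>
     f (x # s) = f (insort x s) \<or> f (x # s) = - f (insort x s)"
proof (induct s arbitrary: f)
  case Nil then show ?case by simp
next
  case (Cons a s)
  show ?case
  proof (cases "x \<le> a")
    case True then show ?thesis by simp
  next
    case False
    have sw: "f (x # a # s) = - f (a # x # s)"
      using Cons.prems(1)[unfolded anti_def, rule_format, of "a#x#s" 0] by (simp add: swapl_0)
    have "anti (\<lambda>ys. f (a # ys)) (Suc (length s))"
      using anti_Cons[of f _ a] Cons.prems(1) by simp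
    then have "f (a # x # s) = f (a # insort x s) \<or> f (a # x # s) = - f (a # insort x s)"
      using Cons.hyps Cons.prems(2) by simp
    then show ?thesis using False sw by auto
  qed
qed

lemma anti_sort: "anti f (length xs) \<Longrightarrow> f xs = f (sort xs) \<or> f xs = - f (sort xs)"
proof (induct xs arbitrary: f)
  case Nil then show ?case by simp
next
  case (Cons x xs)
  have "anti (\<lambda>ys. f (x # ys)) (length xs)" using anti_Cons Cons.prems by fastforce
  then have 1: "f (x # xs) = f (x # sort xs) \<or> f (x # xs) = - f (x # sort xs)"
    using Cons.hyps by blast
  have 2: "f (x # sort xs) = f (insort x (sort xs)) \<or> f (x # sort xs) = - f (insort x (sort xs))"
    by (rule anti_insort) (use Cons.prems in auto)
  from 1 2 show ?case by auto
qed

lemma symm_insort: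
  "symm f (Suc (length s)) \<Longrightarrow> sorted s \<Longrightarrow> f (x # s) = f (insort x s)"
proof (induct s arbitrary: f)
  case Nil then show ?case by simp
next
  case (Cons a s)
  show ?case
  proof (cases "x \<le> a")
    case True then show ?thesis by simp
  next
    case False
    have sw: "f (x # a # s) = f (a # x # s)"
      using Cons.prems(1)[unfolded symm_def, rule_format, of "a#x#s" 0] by (simp add: swapl_0)
    have "symm (\<lambda>ys. f (a # ys)) (Suc (length s))"
      using symm_Cons[of f _ a] Cons.prems(1) by simp
    then have "f (a # x # s) = f (a # insort x s)"
      using Cons.hyps Cons.prems(2) by simp
    then show ?thesis using False sw by auto
  qed
qed

lemma symm_sort: "symm f (length xs) \<Longrightarrow> f xs = f (sort xs)"
proof (induct xs arbitrary: f)
  case Nil then show ?case by simp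
next
  case (Cons x xs)
  have "symm (\<lambda>ys. f (x # ys)) (length xs)" using symm_Cons Cons.prems by fastforce
  then have 1: "f (x # xs) = f (x # sort xs)"
    using Cons.hyps by blast
  have 2: "f (x # sort xs) = f (insort x (sort xs))"
    by (rule symm_insort) (use Cons.prems in auto)
  from 1 2 show ?case by auto
qed

lemma sorted_nondistinct: "sorted s \<Longrightarrow> \<not> distinct s \<Longrightarrow> \<exists>p. Suc p < length s \<and> s ! p = s ! Suc p"
proof (induct s)
  case Nil then show ?case by simp
next
  case (Cons a s)
  show ?case
  proof (cases "a \<in> set s")
    case True
    then obtain b s' where s: "s = b # s'" by (cases s) auto
    have "a \<le> b" using Cons.prems(1) s by simp
    moreover have "b \<le> a" using Cons.prems(1) True s by auto
    ultimately show ?thesis using s by (intro exI[of _ 0]) simp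
  next
    case False
    then have "\<not> distinct s" using Cons.prems(2) by simp
    then obtain p where "Suc p < length s" "s ! p = s ! Suc p" using Cons by auto
    then show ?thesis by (intro exI[of _ "Suc p"]) simp
  qed
qed

lemma anti_zero:
  fixes xs :: "'b::linorder list" and f :: "'b list \<Rightarrow> 'a::ab_group_add"
  assumes "anti f (length xs)" "\<not> distinct xs" "\<And>v::'a. v = - v \<Longrightarrow> v = 0"
  shows "f xs = 0"
proof -
  define s where "s = sort xs"
  have "sorted s" "\<not> distinct s" using assms(2) by (simp_all add: s_def)
  then obtain p where p: "Suc p < length s" "s ! p = s ! Suc p"
    using sorted_nondistinct[of s] by blast
  have "swapl p s = s" unfolding swapl_def using p(2) by (metis list_update_id)
  moreover have "length s = length xs" by (simp add: s_def)
  ultimately have "f s = - f s" using assms(1)[unfolded anti_def, rule_format, of s p] p(1) by simp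
  then have "f s = 0" by (rule assms(3))
  then show ?thesis using anti_sort[OF assms(1)] by (auto simp: s_def)
qed





lemma L1: fixes a u v :: "'a::ring" shows "a*u = u*a \<Longrightarrow> a*u*v = u*(a*v)"
  by (simp add: mult.assoc[symmetric])
lemma L2: fixes a u v :: "'a::ring" shows "u*a = -(a*u) \<Longrightarrow> a*u*v = -(u*(a*v))"
proof -
  assume h: "u*a = -(a*u)"
  then have "a*u = -(u*a)" by simp
  then have "a*u*v = -(u*a)*v" by simp
  then show ?thesis by (simp add: mult.assoc)
qed

lemma comm_cm: fixes a u w :: "'a::ring"
  assumes "a*u = u*a" "a*w = w*a" shows "a * cm u w = cm u w * a"
proof -
  have 1: "a*u*w = u*w*a" using L1[OF assms(1), of w] assms(2) by (simp add: mult.assoc)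
  have 2: "a*w*u = w*u*a" using L1[OF assms(2), of u] assms(1) by (simp add: mult.assoc)
  show ?thesis using 1 2 by (simp add: cm_def algebra_simps)
qed

lemma comm_jd: fixes a u w :: "'a::ring"
  assumes "a*u = u*a" "a*w = w*a" shows "a * jd u w = jd u w * a"
proof -
  have 1: "a*u*w = u*w*a" using L1[OF assms(1), of w] assms(2) by (simp add: mult.assoc)
  have 2: "a*w*u = w*u*a" using L1[OF assms(2), of u] assms(1) by (simp add: mult.assoc)
  show ?thesis using 1 2 by (simp add: jd_def algebra_simps)
qed

lemma acomm_cm: fixes a u w :: "'a::ring"
  assumes "a*u = u*a" "w*a = -(a*w)" shows "a * cm u w = - (cm u w * a)"
proof -
  have aw: "a*w = -(w*a)" using assms(2) by simp
  have 1: "a*u*w = - (u*w*a)" using L1[OF assms(1), of w] aw by (simp add: mult.assoc)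
  have 2: "a*w*u = - (w*u*a)" using L2[OF assms(2), of u] assms(1) by (simp add: mult.assoc)
  show ?thesis using 1 2 by (simp add: cm_def algebra_simps)
qed

lemma comm_jd2: fixes a u w :: "'a::ring"
  assumes "u*a = -(a*u)" "w*a = -(a*w)" shows "a * jd u w = jd u w * a"
proof -
  have aw: "a*w = -(w*a)" using assms(2) by simp
  have au: "a*u = -(u*a)" using assms(1) by simp
  have 1: "a*u*w = u*w*a" using L2[OF assms(1), of w] aw by (simp add: mult.assoc)
  have 2: "a*w*u = w*u*a" using L2[OF assms(2), of u] au by (simp add: mult.assoc)
  show ?thesis using 1 2 by (simp add: jd_def algebra_simps)
qed

lemma comm_prod_list: fixes a :: "'a::{ring,monoid_mult}"
  shows "(\<forall>u\<in>set xs. a*u = u*a) \<Longrightarrow> a * prod_list xs = prod_list xs * a"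
proof (induct xs)
  case Nil then show ?case by simp
next
  case (Cons u xs)
  then have "a * u = u * a" "a * prod_list xs = prod_list xs * a" by auto
  then show ?case by (simp add: mult.assoc[symmetric]) (simp add: mult.assoc)
qed

definition sgnn :: "nat \<Rightarrow> 'a::ab_group_add \<Rightarrow> 'a" where
  "sgnn n v = (if even n then v else - v)"

lemma acomm_prod_list: fixes a :: "'a::{ring,monoid_mult}"
  shows "(\<forall>u\<in>set xs. u*a = -(a*u)) \<Longrightarrow> prod_list xs * a = sgnn (length xs) (a * prod_list xs)"
proof (induct xs)
  case Nil then show ?case by (simp add: sgnn_def)
next
  case (Cons u xs)
  then have 1: "u * a = - (a * u)" and 2: "prod_list xs * a = sgnn (length xs) (a * prod_list xs)" by auto
  have "prod_list (u # xs) * a = u * (prod_list xs * a)" by (simp add: mult.assoc)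
  also have "\<dots> = sgnn (length xs) (u * a * prod_list xs)" using 2 by (simp add: sgnn_def mult.assoc)
  also have "\<dots> = sgnn (length (u#xs)) (a * prod_list (u # xs))" using 1 by (simp add: sgnn_def mult.assoc)
  finally show ?case .
qed

lemma sgnn_mult_left: "sgnn n (a * b) = a * sgnn n (b::'a::ring)" by (simp add: sgnn_def)
lemma sgnn_mult_right: "sgnn n (a * b) = sgnn n a * (b::'a::ring)" by (simp add: sgnn_def)

definition cYY :: "nat \<Rightarrow> nat \<Rightarrow> 'k::field R" where "cYY a b = cm (Y a) (Y b)"
definition cYZ :: "nat \<Rightarrow> nat \<Rightarrow> 'k::field R" where "cYZ a b = cm (Y a) (Z b)"
definition JZ :: "nat \<Rightarrow> nat \<Rightarrow> 'k::field R" where "JZ a b = jd (Z a) (Z b)"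

lemma eq_of_cm0: "cm u w = 0 \<Longrightarrow> u * w = w * (u::'a::ring)" by (simp add: cm_def)
lemma eq_of_jd0: "jd u w = 0 \<Longrightarrow> w * u = - (u * (w::'a::ring))"
proof -
  assume "jd u w = 0"
  then have "u*w + w*u = 0" by (simp add: jd_def)
  then show ?thesis by (simp only: add_eq_0_iff)
qed

lemma cYY_Y: "cYY a b * Y c = Y c * cYY a b" unfolding cYY_def by (rule eq_of_cm0[OF R1a])
lemma cYY_Z: "cYY a b * Z c = Z c * cYY a b" unfolding cYY_def by (rule eq_of_cm0[OF R1b])
lemma cYZ_Y: "cYZ a b * Y c = Y c * cYZ a b" unfolding cYZ_def by (rule eq_of_cm0[OF R2])
lemma cYZ_Z: "Z c * cYZ a b = - (cYZ a b * Z c)" unfolding cYZ_def by (rule eq_of_jd0[OF R3])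
lemma JZ_Z: "JZ a b * Z c = Z c * JZ a b" unfolding JZ_def by (rule eq_of_cm0[OF R4])
lemma JZ_Y: "Y c * JZ a b = JZ a b * Y c"
proof -
  have "Y c * JZ a b = JZ a b * Y c + (Z a * cYZ c b + cYZ c b * Z a) + (cYZ c a * Z b + Z b * cYZ c a)"
    by (simp add: JZ_def jd_def cYZ_def cm_def algebra_simps)
  then show ?thesis by (simp add: cYZ_Z[of a c b] cYZ_Z[of b c a])
qed

lemma JZ_sym: "JZ a b = JZ b a" by (simp add: JZ_def jd_def add.commute)
lemma cYY_anti: "cYY b a = - cYY a b" by (simp add: cYY_def cm_def)

lemma cYY_cYZ: "cYY a b * cYZ c d = cYZ c d * cYY a b"
  unfolding cYZ_def by (rule comm_cm) (simp_all add: cYY_Y cYY_Z)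
lemma cYY_JZ: "cYY a b * JZ c d = JZ c d * cYY a b"
  unfolding JZ_def by (rule comm_jd) (simp_all add: cYY_Z)
lemma cYZ_JZ: "cYZ a b * JZ c d = JZ c d * cYZ a b"
  unfolding JZ_def by (rule comm_jd2) (simp_all add: cYZ_Z)
lemma cYZ_cYZ: "cYZ a b * cYZ c d = - (cYZ c d * cYZ a b)"
proof -
  have "cYZ a b * cm (Y c) (Z d) = - (cm (Y c) (Z d) * cYZ a b)"
    by (rule acomm_cm) (simp_all add: cYZ_Y cYZ_Z)
  then show ?thesis by (simp add: cYZ_def)
qed

lemma sum0_neg: "u + w = (0::'a::ab_group_add) \<Longrightarrow> u = - w"
  by (simp add: eq_neg_iff_add_eq_0)

lemma cm_ZY: "cm (Z p) (Y a) = - cYZ a p" by (simp add: cYZ_def cm_def)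

lemma D1: "cYZ a p * cYZ b q = - (cYZ b p * cYZ a q)"
proof -
  have "cm (XV True p) (Y a) * cm (Y b) (XV True q) + cm (XV True p) (Y b) * cm (Y a) (XV True q) = (0::'k::field R)"
    by (rule R6)
  then have "- (cYZ a p * cYZ b q) + - (cYZ b p * cYZ a q) = 0"
    by (simp add: XV_def cm_ZY cYZ_def[symmetric])
  then have "- (cYZ a p * cYZ b q) = - (- (cYZ b p * cYZ a q))" by (rule sum0_neg)
  then show ?thesis by (metis minus_minus)
qed

lemma D2: "cYZ a p * cYZ b q = cYZ a q * cYZ b p"
  using cYZ_cYZ[of a p b q] D1[of b q a p] by (metis minus_minus)

lemma R5': "JZ a b * JZ c d = JZ a c * JZ b d" unfolding JZ_def by (rule R5)
lemma R7': "cYZ a b * JZ c d = cYZ a c * JZ b d" unfolding JZ_def cYZ_def by (rule R7)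

lemma R6YY: "cYY a b * cYY c d = - (cYY a c * cYY b d)"
proof -
  have "cm (XV False a) (Y b) * cm (Y c) (XV False d) + cm (XV False a) (Y c) * cm (Y b) (XV False d) = (0::'k::field R)"
    by (rule R6)
  then show ?thesis by (intro sum0_neg) (simp add: XV_def cYY_def)
qed

lemma R6YZ: "cYY a b * cYZ c d = - (cYY a c * cYZ b d)"
proof -
  have "cm (XV False a) (Y b) * cm (Y c) (XV True d) + cm (XV False a) (Y c) * cm (Y b) (XV True d) = (0::'k::field R)"
    by (rule R6)
  then show ?thesis by (intro sum0_neg) (simp add: XV_def cYY_def cYZ_def)
qed





lemma upt_split: "k < m \<Longrightarrow> [0..<m] = [0..<k] @ k # [Suc k..<m]"
  using upt_add_eq_append[of 0 k "m-k"] upt_conv_Cons[of k m] by simp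

lemma prod_cong_upt:
  "(\<And>j. a \<le> j \<Longrightarrow> j < b \<Longrightarrow> f j = g j) \<Longrightarrow> prod_list (map f [a..<b]) = prod_list (map g [a..<b])"
  by (rule arg_cong[where f=prod_list], rule map_cong) auto

lemma prod_change1:
  fixes f g :: "nat \<Rightarrow> 'a::{ring,monoid_mult}"
  assumes "k < m" "\<And>j. j < m \<Longrightarrow> j \<noteq> k \<Longrightarrow> g j = f j" "g k = - f k"
  shows "prod_list (map g [0..<m]) = - prod_list (map f [0..<m])"
proof -
  have 1: "prod_list (map g [0..<k]) = prod_list (map f [0..<k])"
    by (rule prod_cong_upt) (use assms in auto)
  have 2: "prod_list (map g [Suc k..<m]) = prod_list (map f [Suc k..<m])"
    by (rule prod_cong_upt) (use assms in auto)
  show ?thesis using 1 2 assms(3) by (simp add: upt_split[OF assms(1)])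
qed

lemma upt_split2: "Suc k < m \<Longrightarrow> [0..<m] = [0..<k] @ k # Suc k # [Suc (Suc k)..<m]"
  using upt_split[of k m] upt_conv_Cons[of "Suc k" m] by simp

lemma prod_change2:
  fixes f g :: "nat \<Rightarrow> 'a::{ring,monoid_mult}"
  assumes "Suc k < m" "\<And>j. j < m \<Longrightarrow> j \<noteq> k \<Longrightarrow> j \<noteq> Suc k \<Longrightarrow> g j = f j"
    "g k * g (Suc k) = - (f k * f (Suc k))"
  shows "prod_list (map g [0..<m]) = - prod_list (map f [0..<m])"
proof -
  have 1: "prod_list (map g [0..<k]) = prod_list (map f [0..<k])"
    by (rule prod_cong_upt) (use assms in auto)
  have 2: "prod_list (map g [Suc (Suc k)..<m]) = prod_list (map f [Suc (Suc k)..<m])"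
    by (rule prod_cong_upt) (use assms in auto)
  have "prod_list (map g [0..<m]) = prod_list (map f [0..<k]) * ((g k * g (Suc k)) * prod_list (map f [Suc (Suc k)..<m]))"
    using 1 2 by (simp add: upt_split2[OF assms(1)] mult.assoc)
  also have "\<dots> = - (prod_list (map f [0..<k]) * ((f k * f (Suc k)) * prod_list (map f [Suc (Suc k)..<m])))"
    using assms(3) by simp
  also have "\<dots> = - prod_list (map f [0..<m])"
    by (simp add: upt_split2[OF assms(1)] mult.assoc)
  finally show ?thesis .
qed

lemma prod_change2':
  fixes f g :: "nat \<Rightarrow> 'a::{ring,monoid_mult}"
  assumes "Suc k < m" "\<And>j. j < m \<Longrightarrow> j \<noteq> k \<Longrightarrow> j \<noteq> Suc k \<Longrightarrow> g j = f j"
    "g k * g (Suc k) = f k * f (Suc k)"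
  shows "prod_list (map g [0..<m]) = prod_list (map f [0..<m])"
proof -
  have 1: "prod_list (map g [0..<k]) = prod_list (map f [0..<k])"
    by (rule prod_cong_upt) (use assms in auto)
  have 2: "prod_list (map g [Suc (Suc k)..<m]) = prod_list (map f [Suc (Suc k)..<m])"
    by (rule prod_cong_upt) (use assms in auto)
  have "prod_list (map g [0..<m]) = prod_list (map f [0..<k]) * ((g k * g (Suc k)) * prod_list (map f [Suc (Suc k)..<m]))"
    using 1 2 by (simp add: upt_split2[OF assms(1)] mult.assoc)
  also have "\<dots> = prod_list (map f [0..<k]) * ((f k * f (Suc k)) * prod_list (map f [Suc (Suc k)..<m]))"
    using assms(3) by simp
  also have "\<dots> = prod_list (map f [0..<m])"
    by (simp add: upt_split2[OF assms(1)] mult.assoc)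
  finally show ?thesis .
qed

lemma prod_last: "0 < m \<Longrightarrow> prod_list (map f [0..<m]) = prod_list (map f [0..<m-1]) * (f (m-1) :: 'a::monoid_mult)"
  by (cases m) simp_all

lemma prod_first: "0 < n \<Longrightarrow> prod_list (map f [0..<n]) = (f 0 :: 'a::monoid_mult) * prod_list (map f [1..<n])"
  by (simp add: upt_conv_Cons)

lemma prod_eq_upt: "(\<And>j. j < m \<Longrightarrow> g j = f j) \<Longrightarrow> prod_list (map g [0..<m]) = prod_list (map f [0..<m])"
  by (rule prod_cong_upt) auto

section \<open>The h-polynomials in R\<close>

definition fa :: "nat list \<Rightarrow> nat \<Rightarrow> 'k::field R" where
  "fa ys k = cYY (ys ! (2*k)) (ys ! (2*k+1))"
definition fb :: "nat \<Rightarrow> nat list \<Rightarrow> nat list \<Rightarrow> nat \<Rightarrow> 'k::field R" where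
  "fb m ys zs k = cYZ (ys ! (2*m+k)) (zs ! k)"
definition fc :: "nat \<Rightarrow> nat list \<Rightarrow> nat \<Rightarrow> 'k::field R" where
  "fc n zs k = JZ (zs ! (n+2*k)) (zs ! (n+2*k+1))"

definition HR :: "nat \<Rightarrow> nat \<Rightarrow> nat \<Rightarrow> nat list \<Rightarrow> nat list \<Rightarrow> 'k::field R" where
  "HR m n r ys zs = prod_list (map (fa ys) [0..<m]) * (prod_list (map (fb m ys zs) [0..<n]) * prod_list (map (fc n zs) [0..<r]))"

lemma HR_A1:
  assumes l: "length ys = 2*m+n" and k: "Suc (2*k) < 2*m"
  shows "HR m n r (swapl (2*k) ys) zs = - (HR m n r ys zs :: 'k::field R)"
proof -
  have nth: "\<And>i. swapl (2*k) ys ! i = (if i = 2*k then ys ! Suc (2*k) else if i = Suc (2*k) then ys ! (2*k) else ys ! i)"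
    using nth_swapl[of "2*k" ys] assms by simp
  have B: "prod_list (map (fb m (swapl (2*k) ys) zs) [0..<n]) = (prod_list (map (fb m ys zs) [0..<n]) :: 'k R)"
    by (intro prod_eq_upt) (use k in \<open>simp add: fb_def nth\<close>)
  have A: "prod_list (map (fa (swapl (2*k) ys)) [0..<m]) = - (prod_list (map (fa ys) [0..<m]) :: 'k R)"
  proof (rule prod_change1[of k])
    show "k < m" using k by simp
    show "fa (swapl (2*k) ys) j = fa ys j" if "j < m" "j \<noteq> k" for j using that by (simp add: fa_def nth)
    show "fa (swapl (2*k) ys) k = - fa ys k" by (simp add: fa_def nth) (rule cYY_anti)
  qed
  show ?thesis by (simp add: HR_def A B)
qed

lemma HR_A2:
  assumes l: "length ys = 2*m+n" and k: "Suc (Suc (2*k)) < 2*m"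
  shows "HR m n r (swapl (Suc (2*k)) ys) zs = - (HR m n r ys zs :: 'k::field R)"
proof -
  have nth: "\<And>i. swapl (Suc (2*k)) ys ! i = (if i = Suc (2*k) then ys ! Suc (Suc (2*k)) else if i = Suc (Suc (2*k)) then ys ! Suc (2*k) else ys ! i)"
    using nth_swapl[of "Suc (2*k)" ys] assms by simp
  have B: "prod_list (map (fb m (swapl (Suc (2*k)) ys) zs) [0..<n]) = (prod_list (map (fb m ys zs) [0..<n]) :: 'k R)"
    by (intro prod_eq_upt) (use k in \<open>simp add: fb_def nth\<close>)
  have A: "prod_list (map (fa (swapl (Suc (2*k)) ys)) [0..<m]) = - (prod_list (map (fa ys) [0..<m]) :: 'k R)"
  proof (rule prod_change2[of k])
    show "Suc k < m" using k by simp
    show "fa (swapl (Suc (2*k)) ys) j = fa ys j" if "j < m" "j \<noteq> k" "j \<noteq> Suc k" for j using that by (simp add: fa_def nth)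
    have e1: "fa (swapl (Suc (2*k)) ys) k = cYY (ys!(2*k)) (ys!Suc (Suc (2*k)))" by (simp add: fa_def nth)
    have e2: "fa (swapl (Suc (2*k)) ys) (Suc k) = cYY (ys!Suc (2*k)) (ys!Suc (Suc (Suc (2*k))))" by (simp add: fa_def nth)
    have e3: "fa ys k = cYY (ys!(2*k)) (ys!Suc (2*k))" by (simp add: fa_def)
    have e4: "fa ys (Suc k) = cYY (ys!Suc (Suc (2*k))) (ys!Suc (Suc (Suc (2*k))))" by (simp add: fa_def)
    show "fa (swapl (Suc (2*k)) ys) k * fa (swapl (Suc (2*k)) ys) (Suc k) = - (fa ys k * fa ys (Suc k))"
      unfolding e1 e2 e3 e4
      using R6YY[of "ys!(2*k)" "ys!Suc (2*k)" "ys!Suc (Suc (2*k))" "ys!Suc (Suc (Suc (2*k)))"] by (metis minus_minus)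
  qed
  show ?thesis by (simp add: HR_def A B)
qed

lemma HR_AB:
  assumes l: "length ys = 2*m+n" and m: "0 < m" and n: "0 < n"
  shows "HR m n r (swapl (2*m-1) ys) zs = - (HR m n r ys zs :: 'k::field R)"
proof -
  define ys' where "ys' = swapl (2*m-1) ys"
  have nth: "\<And>i. ys' ! i = (if i = 2*m-1 then ys ! (2*m) else if i = 2*m then ys ! (2*m-1) else ys ! i)"
    unfolding ys'_def using nth_swapl[of "2*m-1" ys] assms by simp
  let ?C = "prod_list (map (fc n zs) [0..<r]) :: 'k R"
  have A0: "prod_list (map (fa ys') [0..<m-1]) = (prod_list (map (fa ys) [0..<m-1]) :: 'k R)"
  proof (intro prod_eq_upt)
    fix j assume "j < m - 1"
    then have "j \<noteq> m" "2*j \<noteq> 2*m-1" "Suc (2*j) \<noteq> 2*m-1" "2*j \<noteq> 2*m" "Suc (2*j) \<noteq> 2*m" by linarith+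
    then show "fa ys' j = fa ys j" by (simp add: fa_def nth)
  qed
  have B0: "prod_list (map (fb m ys' zs) [1..<n]) = (prod_list (map (fb m ys zs) [1..<n]) :: 'k R)"
  proof (intro prod_cong_upt)
    fix j :: nat assume "1 \<le> j"
    then have "2*m+j \<noteq> 2*m-1" "2*m+j \<noteq> 2*m" by linarith+
    then show "fb m ys' zs j = fb m ys zs j" by (simp add: fb_def nth)
  qed
  have i1: "2*(m-1) = 2*m-2" "2*m-2+1 = 2*m-1" using m by auto
  have ne: "2*m-2 \<noteq> 2*m-1" "2*m-2 \<noteq> 2*m" "2*m \<noteq> 2*m-1" using m by arith+
  have n1: "ys'!(2*m-2) = ys!(2*m-2)" using ne nth[of "2*m-2"] by simp
  have n2: "ys'!(2*m-1) = ys!(2*m)" using nth[of "2*m-1"] by simp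
  have n3: "ys'!(2*m) = ys!(2*m-1)" using ne nth[of "2*m"] by simp
  have e1: "fa ys' (m-1) = cYY (ys!(2*m-2)) (ys!(2*m))" unfolding fa_def i1 n1 n2 ..
  have e2: "fb m ys' zs 0 = cYZ (ys!(2*m-1)) (zs!0)" unfolding fb_def using n3 by simp
  have e3: "fa ys (m-1) = cYY (ys!(2*m-2)) (ys!(2*m-1))" unfolding fa_def i1 by simp
  have e4: "fb m ys zs 0 = cYZ (ys!(2*m)) (zs!0)" by (simp add: fb_def)
  have key: "fa ys' (m-1) * fb m ys' zs 0 = - (fa ys (m-1) * fb m ys zs 0 :: 'k R)"
    unfolding e1 e2 e3 e4
    using R6YZ[of "ys!(2*m-2)" "ys!(2*m-1)" "ys!(2*m)" "zs!0"] by (metis minus_minus)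
  have "HR m n r ys' zs = prod_list (map (fa ys') [0..<m-1]) * ((fa ys' (m-1) * fb m ys' zs 0) * (prod_list (map (fb m ys' zs) [1..<n]) * ?C))"
    unfolding HR_def by (simp add: prod_last[OF m] prod_first[OF n] mult.assoc)
  also have "\<dots> = - (prod_list (map (fa ys) [0..<m-1]) * ((fa ys (m-1) * fb m ys zs 0) * (prod_list (map (fb m ys zs) [1..<n]) * ?C)))"
    unfolding A0 B0 key by simp
  also have "\<dots> = - HR m n r ys zs"
    unfolding HR_def by (simp add: prod_last[OF m] prod_first[OF n] mult.assoc)
  finally show ?thesis by (simp add: ys'_def)
qed

lemma HR_B:
  assumes l: "length ys = 2*m+n" and k: "Suc k < n"
  shows "HR m n r (swapl (2*m+k) ys) zs = - (HR m n r ys zs :: 'k::field R)"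
proof -
  define ys' where "ys' = swapl (2*m+k) ys"
  have nth: "\<And>i. ys' ! i = (if i = 2*m+k then ys ! Suc (2*m+k) else if i = Suc (2*m+k) then ys ! (2*m+k) else ys ! i)"
    unfolding ys'_def using nth_swapl[of "2*m+k" ys] assms by simp
  have A: "prod_list (map (fa ys') [0..<m]) = (prod_list (map (fa ys) [0..<m]) :: 'k R)"
    by (intro prod_eq_upt) (simp add: fa_def nth)
  have B: "prod_list (map (fb m ys' zs) [0..<n]) = - (prod_list (map (fb m ys zs) [0..<n]) :: 'k R)"
  proof (rule prod_change2[of k])
    show "Suc k < n" using k by simp
    show "fb m ys' zs j = fb m ys zs j" if "j < n" "j \<noteq> k" "j \<noteq> Suc k" for j using that by (simp add: fb_def nth)
    show "fb m ys' zs k * fb m ys' zs (Suc k) = - (fb m ys zs k * fb m ys zs (Suc k))"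
      using D1[of "ys!(2*m+k+1)" "zs!k" "ys!(2*m+k)" "zs!(Suc k)"] by (simp add: fb_def nth)
  qed
  show ?thesis by (simp add: HR_def A B ys'_def[symmetric])
qed

lemma HR_anti: "anti (\<lambda>ys. HR m n r ys zs :: 'k::field R) (2*m+n)"
  unfolding anti_def
proof (intro allI impI)
  fix ys :: "nat list" and p assume l: "length ys = 2*m+n" and p: "Suc p < 2*m+n"
  show "HR m n r (swapl p ys) zs = - HR m n r ys zs"
  proof (cases "Suc p < 2*m")
    case True
    show ?thesis
    proof (cases "even p")
      case True
      then obtain k where k: "p = 2*k" by (rule evenE)
      show ?thesis unfolding k by (rule HR_A1[OF l]) (use k \<open>Suc p < 2*m\<close> in simp)
    next
      case False
      then obtain k where k: "p = Suc (2*k)" using oddE by (metis add.commute plus_1_eq_Suc)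
      show ?thesis unfolding k by (rule HR_A2[OF l]) (use k \<open>Suc p < 2*m\<close> in simp)
    qed
  next
    case False
    show ?thesis
    proof (cases "Suc p = 2*m")
      case True
      then have m: "0 < m" and n: "0 < n" and pm: "p = 2*m - 1" using p by auto
      show ?thesis unfolding pm by (rule HR_AB[OF l m n])
    next
      case False
      then have pm: "2*m \<le> p" using \<open>\<not> Suc p < 2*m\<close> by simp
      define k where "k = p - 2*m"
      have pk: "p = 2*m + k" using pm k_def by simp
      show ?thesis unfolding pk by (rule HR_B[OF l]) (use pk p in simp)
    qed
  qed
qed

lemma HR_ZB:
  assumes l: "length zs = n+2*r" and k: "Suc k < n"
  shows "HR m n r ys (swapl k zs) = (HR m n r ys zs :: 'k::field R)"
proof -
  define zs' where "zs' = swapl k zs"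
  have nth: "\<And>i. zs' ! i = (if i = k then zs ! Suc k else if i = Suc k then zs ! k else zs ! i)"
    unfolding zs'_def using nth_swapl[of k zs] assms by simp
  have C: "prod_list (map (fc n zs') [0..<r]) = (prod_list (map (fc n zs) [0..<r]) :: 'k R)"
    by (intro prod_eq_upt) (use k in \<open>simp add: fc_def nth\<close>)
  have B: "prod_list (map (fb m ys zs') [0..<n]) = (prod_list (map (fb m ys zs) [0..<n]) :: 'k R)"
  proof (rule prod_change2'[of k])
    show "Suc k < n" using k by simp
    show "fb m ys zs' j = fb m ys zs j" if "j < n" "j \<noteq> k" "j \<noteq> Suc k" for j using that by (simp add: fb_def nth)
    show "fb m ys zs' k * fb m ys zs' (Suc k) = fb m ys zs k * fb m ys zs (Suc k)"
      using D2[of "ys!(2*m+k)" "zs!k" "ys!(2*m+Suc k)" "zs!Suc k", symmetric] by (simp add: fb_def nth)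
  qed
  show ?thesis by (simp add: HR_def B C zs'_def[symmetric])
qed

lemma HR_ZBC:
  assumes l: "length zs = n+2*r" and n: "0 < n" and r: "0 < r"
  shows "HR m n r ys (swapl (n-1) zs) = (HR m n r ys zs :: 'k::field R)"
proof -
  define zs' where "zs' = swapl (n-1) zs"
  have nth: "\<And>i. zs' ! i = (if i = n-1 then zs ! n else if i = n then zs ! (n-1) else zs ! i)"
    unfolding zs'_def using nth_swapl[of "n-1" zs] assms by simp
  let ?A = "prod_list (map (fa ys) [0..<m]) :: 'k R"
  have B0: "prod_list (map (fb m ys zs') [0..<n-1]) = (prod_list (map (fb m ys zs) [0..<n-1]) :: 'k R)"
  proof (intro prod_eq_upt)
    fix j assume "j < n - 1"
    then have "j \<noteq> n-1" "j \<noteq> n" by linarith+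
    then show "fb m ys zs' j = fb m ys zs j" by (simp add: fb_def nth)
  qed
  have C0: "prod_list (map (fc n zs') [1..<r]) = (prod_list (map (fc n zs) [1..<r]) :: 'k R)"
  proof (intro prod_cong_upt)
    fix j :: nat assume "1 \<le> j"
    then have "n+2*j \<noteq> n-1" "n+2*j \<noteq> n" "n+2*j+1 \<noteq> n-1" "n+2*j+1 \<noteq> n" by linarith+
    then show "fc n zs' j = fc n zs j" by (simp add: fc_def nth)
  qed
  have ne: "n-1 \<noteq> n" "n+1 \<noteq> n-1" "n + 1 \<noteq> n" using n by arith+
  have n1: "zs'!(n-1) = zs!n" using nth[of "n-1"] by simp
  have n2: "zs'!n = zs!(n-1)" using ne nth[of "n"] by simp
  have n3: "zs'!(n+1) = zs!(n+1)" using ne nth[of "n+1"] by simp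
  have e1: "fb m ys zs' (n-1) = cYZ (ys!(2*m+(n-1))) (zs!n)" unfolding fb_def n1 ..
  have e2: "fc n zs' 0 = JZ (zs!(n-1)) (zs!(n+1))" unfolding fc_def using n2 n3 by simp
  have e3: "fb m ys zs (n-1) = cYZ (ys!(2*m+(n-1))) (zs!(n-1))" unfolding fb_def ..
  have e4: "fc n zs 0 = JZ (zs!n) (zs!(n+1))" unfolding fc_def by simp
  have key: "fb m ys zs' (n-1) * fc n zs' 0 = fb m ys zs (n-1) * fc n zs 0"
    unfolding e1 e2 e3 e4 using R7'[of "ys!(2*m+(n-1))" "zs!(n-1)" "zs!n" "zs!(n+1)", symmetric] by simp
  have "HR m n r ys zs' = ?A * (prod_list (map (fb m ys zs') [0..<n-1]) * ((fb m ys zs' (n-1) * fc n zs' 0) * prod_list (map (fc n zs') [1..<r])))"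
    unfolding HR_def by (simp add: prod_last[OF n] prod_first[OF r] mult.assoc)
  also have "\<dots> = ?A * (prod_list (map (fb m ys zs) [0..<n-1]) * ((fb m ys zs (n-1) * fc n zs 0) * prod_list (map (fc n zs) [1..<r])))"
    unfolding B0 C0 key ..
  also have "\<dots> = HR m n r ys zs"
    unfolding HR_def by (simp add: prod_last[OF n] prod_first[OF r] mult.assoc)
  finally show ?thesis by (simp add: zs'_def)
qed

lemma HR_ZC1:
  assumes l: "length zs = n+2*r" and k: "k < r"
  shows "HR m n r ys (swapl (n+2*k) zs) = (HR m n r ys zs :: 'k::field R)"
proof -
  define zs' where "zs' = swapl (n+2*k) zs"
  have nth: "\<And>i. zs' ! i = (if i = n+2*k then zs ! Suc (n+2*k) else if i = Suc (n+2*k) then zs ! (n+2*k) else zs ! i)"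
    unfolding zs'_def using nth_swapl[of "n+2*k" zs] assms by simp
  have B: "prod_list (map (fb m ys zs') [0..<n]) = (prod_list (map (fb m ys zs) [0..<n]) :: 'k R)"
    by (intro prod_eq_upt) (simp add: fb_def nth)
  have C: "prod_list (map (fc n zs') [0..<r]) = (prod_list (map (fc n zs) [0..<r]) :: 'k R)"
  proof (intro prod_eq_upt)
    fix j assume "j < r"
    show "fc n zs' j = fc n zs j"
    proof (cases "j = k")
      case True then show ?thesis by (simp add: fc_def nth) (rule JZ_sym)
    next
      case False then show ?thesis by (simp add: fc_def nth)
    qed
  qed
  show ?thesis by (simp add: HR_def B C zs'_def[symmetric])
qed

lemma HR_ZC2:
  assumes l: "length zs = n+2*r" and k: "Suc k < r"
  shows "HR m n r ys (swapl (Suc (n+2*k)) zs) = (HR m n r ys zs :: 'k::field R)"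
proof -
  define zs' where "zs' = swapl (Suc (n+2*k)) zs"
  have nth: "\<And>i. zs' ! i = (if i = Suc (n+2*k) then zs ! Suc (Suc (n+2*k)) else if i = Suc (Suc (n+2*k)) then zs ! Suc (n+2*k) else zs ! i)"
    unfolding zs'_def using nth_swapl[of "Suc (n+2*k)" zs] assms by simp
  have B: "prod_list (map (fb m ys zs') [0..<n]) = (prod_list (map (fb m ys zs) [0..<n]) :: 'k R)"
    by (intro prod_eq_upt) (simp add: fb_def nth)
  have C: "prod_list (map (fc n zs') [0..<r]) = (prod_list (map (fc n zs) [0..<r]) :: 'k R)"
  proof (rule prod_change2'[of k])
    show "Suc k < r" using k by simp
    show "fc n zs' j = fc n zs j" if "j < r" "j \<noteq> k" "j \<noteq> Suc k" for j using that by (simp add: fc_def nth)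
    have e1: "fc n zs' k = JZ (zs!(n+2*k)) (zs!Suc (Suc (n+2*k)))" by (simp add: fc_def nth)
    have e2: "fc n zs' (Suc k) = JZ (zs!Suc (n+2*k)) (zs!Suc (Suc (Suc (n+2*k))))" by (simp add: fc_def nth)
    have e3: "fc n zs k = JZ (zs!(n+2*k)) (zs!Suc (n+2*k))" by (simp add: fc_def)
    have e4: "fc n zs (Suc k) = JZ (zs!Suc (Suc (n+2*k))) (zs!Suc (Suc (Suc (n+2*k))))" by (simp add: fc_def)
    show "fc n zs' k * fc n zs' (Suc k) = fc n zs k * fc n zs (Suc k)"
      unfolding e1 e2 e3 e4
      using R5'[of "zs!(n+2*k)" "zs!Suc (n+2*k)" "zs!Suc (Suc (n+2*k))" "zs!Suc (Suc (Suc (n+2*k)))", symmetric] by simp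
  qed
  show ?thesis by (simp add: HR_def B C zs'_def[symmetric])
qed

lemma HR_symm: "symm (\<lambda>zs. HR m n r ys zs :: 'k::field R) (n+2*r)"
  unfolding symm_def
proof (intro allI impI)
  fix zs :: "nat list" and p assume l: "length zs = n+2*r" and p: "Suc p < n+2*r"
  show "HR m n r ys (swapl p zs) = HR m n r ys zs"
  proof (cases "Suc p < n")
    case True then show ?thesis by (rule HR_ZB[OF l])
  next
    case False
    show ?thesis
    proof (cases "Suc p = n")
      case True
      then have n: "0 < n" and r: "0 < r" and pn: "p = n - 1" using p by auto
      show ?thesis unfolding pn by (rule HR_ZBC[OF l n r])
    next
      case False
      then have pn: "n \<le> p" using \<open>\<not> Suc p < n\<close> by simp
      define q where "q = p - n"
      have pq: "p = n + q" using pn q_def by simp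
      show ?thesis
      proof (cases "even q")
        case True
        then obtain k where k: "q = 2*k" by (rule evenE)
        show ?thesis unfolding pq k by (rule HR_ZC1[OF l]) (use p pq k in simp)
      next
        case False
        then obtain k where k: "q = Suc (2*k)" using oddE by (metis add.commute plus_1_eq_Suc)
        have "p = Suc (n + 2*k)" using pq k by simp
        then show ?thesis by (simp only:) (rule HR_ZC2[OF l], use p \<open>p = Suc (n + 2*k)\<close> in simp)
      qed
    qed
  qed
qed





inductive_set lspan :: "'k::field R set \<Rightarrow> 'k R set" for S where
  lz: "0 \<in> lspan S"
| lb: "s \<in> S \<Longrightarrow> s \<in> lspan S"
| la: "u \<in> lspan S \<Longrightarrow> v \<in> lspan S \<Longrightarrow> u + v \<in> lspan S"
| ls: "u \<in> lspan S \<Longrightarrow> sc c * u \<in> lspan S"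

lemma sc_neg1: "sc (-1) = (-1 :: 'k::field R)"
proof -
  have "sc (-1) + sc 1 = (sc 0 :: 'k R)" by (simp add: sc_add)
  then have "sc (-1) + 1 = (0 :: 'k R)" by (simp add: sc_one sc_zero)
  then show ?thesis by (simp add: eq_neg_iff_add_eq_0)
qed

lemma lspan_neg: "u \<in> lspan S \<Longrightarrow> - u \<in> lspan S"
  using lspan.ls[of u S "-1"] by (simp add: sc_neg1)

lemma lspan_diff: "u \<in> lspan S \<Longrightarrow> v \<in> lspan S \<Longrightarrow> u - v \<in> lspan S"
  using lspan.la[of u S "-v"] lspan_neg[of v S] by simp

lemma lspan_sgnn: "u \<in> lspan S \<Longrightarrow> sgnn n u \<in> lspan S"
  by (simp add: sgnn_def lspan_neg)

lemma lspan_mono: "x \<in> lspan S \<Longrightarrow> S \<subseteq> lspan T \<Longrightarrow> x \<in> lspan T"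
  by (induct x rule: lspan.induct) (auto intro: lspan.intros)

lemma lspan_mult_right:
  "x \<in> lspan S \<Longrightarrow> (\<And>s. s \<in> S \<Longrightarrow> s * b \<in> lspan T) \<Longrightarrow> x * b \<in> lspan T"
proof (induct x rule: lspan.induct)
  case lz then show ?case by (simp add: lspan.lz)
next
  case (lb s) then show ?case by simp
next
  case (la u v) then show ?case by (simp add: distrib_right lspan.la)
next
  case (ls u c) then show ?case by (simp add: mult.assoc lspan.ls)
qed

lemma lspan_mult_left:
  "x \<in> lspan S \<Longrightarrow> (\<And>s. s \<in> S \<Longrightarrow> b * s \<in> lspan T) \<Longrightarrow> b * x \<in> lspan T"
proof (induct x rule: lspan.induct)
  case lz then show ?case by (simp add: lspan.lz)
next
  case (lb s) then show ?case by simp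
next
  case (la u v) then show ?case by (simp add: distrib_left lspan.la)
next
  case (ls u c)
  have "b * (sc c * u) = (b * sc c) * u" by (simp add: mult.assoc)
  also have "\<dots> = (sc c * b) * u" by (simp add: sc_comm)
  also have "\<dots> = sc c * (b * u)" by (simp add: mult.assoc)
  finally have "b * (sc c * u) = sc c * (b * u)" .
  then show ?case using ls by (simp add: lspan.ls)
qed

lemma half_double: assumes two: "(2::'k::field) \<noteq> 0" shows "sc (1/2) * (u + u) = (u :: 'k R)"
proof -
  have "sc (1/2) * (u + u) = (sc (1/2) + sc (1/2)) * u" by (simp add: algebra_simps)
  also have "\<dots> = sc 1 * u" by (simp add: sc_add two)
  finally show ?thesis by (simp add: sc_one)
qed

lemma self_neg: assumes two: "(2::'k::field) \<noteq> 0" shows "u = - u \<Longrightarrow> u = (0 :: 'k R)"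
proof -
  assume "u = - u"
  then have "u + u = 0" by (metis add.right_inverse)
  then show ?thesis using half_double[OF two, of u] by simp
qed

lemma ZZ_half: assumes two: "(2::'k::field) \<noteq> 0" shows "Z j * Z j = sc (1/2) * (JZ j j :: 'k R)"
  using half_double[OF two, of "Z j * Z j"] by (simp add: JZ_def jd_def)

definition nhc :: "nat \<Rightarrow> nat \<Rightarrow> nat \<Rightarrow> nat list \<Rightarrow> nat list \<Rightarrow> bool" where
  "nhc m n r ys zs \<longleftrightarrow> length ys = 2*m+n \<and> sorted_wrt (<) ys \<and> length zs = n+2*r \<and> sorted zs"

definition NH :: "'k::field R set" where
  "NH = {HR m n r ys zs | m n r ys zs. nhc m n r ys zs}"


lemma sortH:
  assumes two: "(2::'k::field) \<noteq> 0" and l: "length ys = 2*m+n" "length zs = n+2*r"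
  shows "(HR m n r ys zs :: 'k R) \<in> lspan NH"
proof (cases "distinct ys")
  case False
  have a: "anti (\<lambda>ys. HR m n r ys zs :: 'k R) (length ys)" using HR_anti[of m n r zs] l(1) by simp
  have "(HR m n r ys zs :: 'k R) = 0"
    using anti_zero[OF a False self_neg[OF two]] by simp
  then show ?thesis by (simp add: lspan.lz)
next
  case True
  have a: "anti (\<lambda>ys. HR m n r ys zs :: 'k R) (length ys)" using HR_anti[of m n r zs] l(1) by simp
  have 1: "HR m n r ys zs = (HR m n r (sort ys) zs :: 'k R) \<or> HR m n r ys zs = - (HR m n r (sort ys) zs :: 'k R)"
    using anti_sort[OF a] by simp
  have b: "symm (\<lambda>zs. HR m n r (sort ys) zs :: 'k R) (length zs)" using HR_symm[of m n r "sort ys"] l(2) by simp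
  have 2: "HR m n r (sort ys) zs = (HR m n r (sort ys) (sort zs) :: 'k R)"
    using symm_sort[OF b] by simp
  have "(HR m n r (sort ys) (sort zs) :: 'k R) \<in> NH"
    unfolding NH_def nhc_def using True l
    by (intro CollectI exI[of _ m] exI[of _ n] exI[of _ r] exI[of _ "sort ys"] exI[of _ "sort zs"]) (simp add: strict_sorted_iff)
  then have "(HR m n r (sort ys) zs :: 'k R) \<in> lspan NH" using 2 by (simp add: lspan.lb)
  then show ?thesis using 1 lspan_neg by auto
qed

lemma cYY_comm_PB: "cYY a b * prod_list (map (fb m ys zs) [0..<n]) = prod_list (map (fb m ys zs) [0..<n]) * (cYY a b :: 'k::field R)"
  by (rule comm_prod_list) (auto simp: fb_def cYY_cYZ)
lemma cYY_comm_PC: "cYY a b * prod_list (map (fc n zs) [0..<r]) = prod_list (map (fc n zs) [0..<r]) * (cYY a b :: 'k::field R)"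
  by (rule comm_prod_list) (auto simp: fc_def cYY_JZ)
lemma cYZ_comm_PC: "cYZ a b * prod_list (map (fc n zs) [0..<r]) = prod_list (map (fc n zs) [0..<r]) * (cYZ a b :: 'k::field R)"
  by (rule comm_prod_list) (auto simp: fc_def cYZ_JZ)

lemma HR_ext_YY:
  assumes l: "length ys = 2*m+n"
  shows "HR m n r ys zs * cYY a b = (HR (Suc m) n r (take (2*m) ys @ a # b # drop (2*m) ys) zs :: 'k::field R)"
proof -
  define ys' where "ys' = take (2*m) ys @ a # b # drop (2*m) ys"
  have n1: "ys' ! i = ys ! i" if "i < 2*m" for i using that l by (simp add: ys'_def nth_append)
  have n2: "ys' ! (2*m) = a" "ys' ! Suc (2*m) = b" using l by (simp_all add: ys'_def nth_append)
  have n3: "ys' ! (Suc (Suc (2*m)) + k) = ys ! (2*m+k)" for k using l by (simp add: ys'_def nth_append)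
  have A: "prod_list (map (fa ys') [0..<Suc m]) = prod_list (map (fa ys) [0..<m]) * (cYY a b :: 'k R)"
  proof -
    have "prod_list (map (fa ys') [0..<m]) = (prod_list (map (fa ys) [0..<m]) :: 'k R)"
    proof (intro prod_eq_upt)
      fix j assume "j < m"
      then have "2*j < 2*m" "Suc (2*j) < 2*m" by linarith+
      then show "fa ys' j = fa ys j" by (simp add: fa_def n1)
    qed
    moreover have "fa ys' m = (cYY a b :: 'k R)" by (simp add: fa_def n2)
    ultimately show ?thesis by simp
  qed
  have B: "prod_list (map (fb (Suc m) ys' zs) [0..<n]) = (prod_list (map (fb m ys zs) [0..<n]) :: 'k R)"
  proof (intro prod_eq_upt)
    fix j assume "j < n"
    have "2 * Suc m + j = Suc (Suc (2*m)) + j" by simp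
    then show "fb (Suc m) ys' zs j = fb m ys zs j" by (simp only: fb_def n3)
  qed
  have "HR m n r ys zs * cYY a b = prod_list (map (fa ys) [0..<m]) * (prod_list (map (fb m ys zs) [0..<n]) * (prod_list (map (fc n zs) [0..<r]) * (cYY a b :: 'k R)))"
    by (simp add: HR_def mult.assoc)
  also have "\<dots> = prod_list (map (fa ys) [0..<m]) * (cYY a b * (prod_list (map (fb m ys zs) [0..<n]) * prod_list (map (fc n zs) [0..<r])))"
    by (simp add: cYY_comm_PB[symmetric] cYY_comm_PC[symmetric] mult.assoc[symmetric])
  also have "\<dots> = HR (Suc m) n r ys' zs"
    unfolding HR_def A B by (simp add: mult.assoc)
  finally show ?thesis by (simp add: ys'_def)
qed

lemma HR_ext_YZ:
  assumes l: "length ys = 2*m+n" and lz: "length zs = n+2*r"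
  shows "HR m n r ys zs * cYZ a b = (HR m (Suc n) r (ys @ [a]) (take n zs @ b # drop n zs) :: 'k::field R)"
proof -
  define zs' where "zs' = take n zs @ b # drop n zs"
  have A: "prod_list (map (fa (ys@[a])) [0..<m]) = (prod_list (map (fa ys) [0..<m]) :: 'k R)"
  proof (intro prod_eq_upt)
    fix j assume "j < m"
    then have "2*j < length ys" "Suc (2*j) < length ys" using l by linarith+
    then show "fa (ys@[a]) j = fa ys j" by (simp add: fa_def nth_append)
  qed
  have B: "prod_list (map (fb m (ys@[a]) zs') [0..<Suc n]) = prod_list (map (fb m ys zs) [0..<n]) * (cYZ a b :: 'k R)"
  proof -
    have "prod_list (map (fb m (ys@[a]) zs') [0..<n]) = (prod_list (map (fb m ys zs) [0..<n]) :: 'k R)"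
    proof (intro prod_eq_upt)
      fix j assume "j < n"
      then have "2*m+j < length ys" "j < length (take n zs)" using l lz by auto
      then show "fb m (ys@[a]) zs' j = fb m ys zs j" by (simp add: fb_def nth_append zs'_def)
    qed
    moreover have "fb m (ys@[a]) zs' n = (cYZ a b :: 'k R)" using l lz by (simp add: fb_def nth_append zs'_def)
    ultimately show ?thesis by simp
  qed
  have C: "prod_list (map (fc (Suc n) zs') [0..<r]) = (prod_list (map (fc n zs) [0..<r]) :: 'k R)"
  proof (intro prod_eq_upt)
    fix j assume "j < r"
    have "zs' ! (Suc n + i) = zs ! (n + i)" for i using lz by (simp add: zs'_def nth_append)
    from this[of "2*j"] this[of "2*j+1"] show "fc (Suc n) zs' j = fc n zs j" by (simp add: fc_def)
  qed
  have "HR m n r ys zs * cYZ a b = prod_list (map (fa ys) [0..<m]) * (prod_list (map (fb m ys zs) [0..<n]) * (prod_list (map (fc n zs) [0..<r]) * (cYZ a b :: 'k R)))"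
    by (simp add: HR_def mult.assoc)
  also have "\<dots> = prod_list (map (fa ys) [0..<m]) * ((prod_list (map (fb m ys zs) [0..<n]) * cYZ a b) * prod_list (map (fc n zs) [0..<r]))"
    by (simp add: cYZ_comm_PC[symmetric] mult.assoc)
  also have "\<dots> = HR m (Suc n) r (ys@[a]) zs'"
    by (simp only: HR_def A B C)
  finally show ?thesis by (simp add: zs'_def)
qed

lemma HR_ext_J:
  assumes lz: "length zs = n+2*r"
  shows "HR m n r ys zs * JZ a b = (HR m n (Suc r) ys (zs @ [a, b]) :: 'k::field R)"
proof -
  have B: "prod_list (map (fb m ys (zs@[a,b])) [0..<n]) = (prod_list (map (fb m ys zs) [0..<n]) :: 'k R)"
  proof (intro prod_eq_upt)
    fix j assume "j < n"
    then have "j < length zs" using lz by simp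
    then show "fb m ys (zs@[a,b]) j = fb m ys zs j" by (simp add: fb_def nth_append)
  qed
  have C: "prod_list (map (fc n (zs@[a,b])) [0..<Suc r]) = prod_list (map (fc n zs) [0..<r]) * (JZ a b :: 'k R)"
  proof -
    have "prod_list (map (fc n (zs@[a,b])) [0..<r]) = (prod_list (map (fc n zs) [0..<r]) :: 'k R)"
    proof (intro prod_eq_upt)
      fix j assume "j < r"
      then have "n+2*j < length zs" "Suc (n+2*j) < length zs" using lz by linarith+
      then show "fc n (zs@[a,b]) j = fc n zs j" by (simp add: fc_def nth_append)
    qed
    moreover have "fc n (zs@[a,b]) r = (JZ a b :: 'k R)" using lz by (simp add: fc_def nth_append)
    ultimately show ?thesis by simp
  qed
  show ?thesis unfolding HR_def B C by (simp add: mult.assoc)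
qed

section \<open>Normal monomials\<close>

definition PZ :: "nat list \<Rightarrow> 'k::field R" where "PZ ks = prod_list (map Z ks)"

definition GN :: "nat set \<Rightarrow> 'k::field R set" where
  "GN T = {HR m n r ys zs * PZ ks | m n r ys zs ks. nhc m n r ys zs \<and> sorted_wrt (<) ks \<and> set ks \<subseteq> T}"

lemma GN_I: "nhc m n r ys zs \<Longrightarrow> sorted_wrt (<) ks \<Longrightarrow> set ks \<subseteq> T \<Longrightarrow> HR m n r ys zs * PZ ks \<in> GN T"
  unfolding GN_def by blast

lemma GN_mono_set: "T \<subseteq> T' \<Longrightarrow> GN T \<subseteq> GN T'"
  unfolding GN_def by blast

lemma GN_mono: "T \<subseteq> T' \<Longrightarrow> x \<in> lspan (GN T) \<Longrightarrow> x \<in> lspan (GN T')"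
  by (erule lspan_mono) (use GN_mono_set lspan.lb in blast)

lemma NH_PZ: "x \<in> lspan NH \<Longrightarrow> sorted_wrt (<) ks \<Longrightarrow> set ks \<subseteq> T \<Longrightarrow> x * PZ ks \<in> lspan (GN T)"
  by (erule lspan_mult_right) (auto simp: NH_def intro!: lspan.lb GN_I)

lemma PZ_snoc: "PZ (ks @ [k]) = PZ ks * Z k" by (simp add: PZ_def)

lemma PZ_JZ: "PZ ks * JZ a b = JZ a b * (PZ ks :: 'k::field R)"
  unfolding PZ_def by (rule comm_prod_list[symmetric]) (auto simp: JZ_Z)

lemma HR_J_PZ:
  assumes two: "(2::'k::field) \<noteq> 0" and h: "nhc m n r ys zs" and ks: "sorted_wrt (<) ks" "set ks \<subseteq> T"
  shows "HR m n r ys zs * JZ a b * PZ ks \<in> lspan (GN T :: 'k R set)"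
proof -
  have "HR m n r ys zs * JZ a b = (HR m n (Suc r) ys (zs @ [a, b]) :: 'k R)"
    using h by (intro HR_ext_J) (simp add: nhc_def)
  moreover have "(HR m n (Suc r) ys (zs @ [a, b]) :: 'k R) \<in> lspan NH"
    using h by (intro sortH[OF two]) (simp_all add: nhc_def)
  ultimately show ?thesis using NH_PZ ks by metis
qed

lemma Ins:
  assumes two: "(2::'k::field) \<noteq> 0" and h: "nhc m n r ys zs"
  shows "sorted_wrt (<) ks \<Longrightarrow> HR m n r ys zs * PZ ks * Z j \<in> lspan (GN (insert j (set ks)) :: 'k R set)"
proof (induct ks rule: rev_induct)
  case Nil
  have "HR m n r ys zs * PZ [] * Z j = HR m n r ys zs * (PZ [j] :: 'k R)" by (simp add: PZ_def)
  also have "\<dots> \<in> GN (insert j (set []))" using h by (intro GN_I) auto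
  finally show ?case by (rule lspan.lb)
next
  case (snoc k ks)
  let ?H = "HR m n r ys zs :: 'k R"
  let ?T = "insert j (set (ks @ [k]))"
  have sk: "sorted_wrt (<) ks" and lt: "\<forall>x\<in>set ks. x < k" using snoc.prems by (auto simp: sorted_wrt_append)
  have H1: "?H * JZ a b * PZ ks \<in> lspan (GN ?T)" for a b
    using HR_J_PZ[OF two h sk, of "set ks" a b] GN_mono[of "set ks" ?T] by auto
  have e: "?H * PZ (ks @ [k]) * Z j = ?H * PZ ks * (Z k * Z j)" by (simp add: PZ_snoc mult.assoc)
  consider "k < j" | "k = j" | "j < k" by arith
  then show ?case
  proof cases
    case 1
    have "?H * PZ (ks @ [k]) * Z j = ?H * PZ (ks @ [k, j])" by (simp add: PZ_def mult.assoc)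
    also have "\<dots> \<in> GN ?T" using h snoc.prems 1
      by (intro GN_I) (auto simp: sorted_wrt_append)
    finally show ?thesis by (rule lspan.lb)
  next
    case 2
    have "?H * PZ (ks @ [k]) * Z j = ?H * PZ ks * (Z j * Z j)" using e 2 by simp
    also have "\<dots> = ?H * PZ ks * (sc (1/2) * JZ j j)" by (simp only: ZZ_half[OF two])
    also have "\<dots> = ?H * ((PZ ks * sc (1/2)) * JZ j j)" by (simp add: mult.assoc)
    also have "\<dots> = ?H * (sc (1/2) * (PZ ks * JZ j j))" by (simp add: sc_comm mult.assoc)
    also have "\<dots> = (?H * sc (1/2)) * (JZ j j * PZ ks)" by (simp add: PZ_JZ mult.assoc)
    also have "\<dots> = sc (1/2) * (?H * JZ j j * PZ ks)" by (simp add: sc_comm mult.assoc)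
    finally show ?thesis using H1[of j j] by (simp add: lspan.ls)
  next
    case 3
    have zz: "Z k * Z j = JZ k j - Z j * (Z k :: 'k R)" by (simp add: JZ_def jd_def)
    have "?H * PZ (ks @ [k]) * Z j = ?H * PZ ks * (JZ k j - Z j * Z k)" using e zz by simp
    also have "\<dots> = ?H * (PZ ks * JZ k j) - ?H * PZ ks * Z j * Z k" by (simp add: algebra_simps)
    also have "\<dots> = ?H * JZ k j * PZ ks - (?H * PZ ks * Z j) * Z k" by (simp add: PZ_JZ mult.assoc)
    finally have "?H * PZ (ks @ [k]) * Z j = ?H * JZ k j * PZ ks - (?H * PZ ks * Z j) * Z k" .
    moreover have "(?H * PZ ks * Z j) * Z k \<in> lspan (GN ?T)"
    proof (rule lspan_mult_right)
      show "?H * PZ ks * Z j \<in> lspan (GN (insert j (set ks)))" by (rule snoc.hyps[OF sk])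
      fix s assume "s \<in> GN (insert j (set ks))"
      then obtain m' n' r' ys' zs' ks' where s: "s = HR m' n' r' ys' zs' * PZ ks'" and
        h': "nhc m' n' r' ys' zs'" "sorted_wrt (<) ks'" "set ks' \<subseteq> insert j (set ks)"
        unfolding GN_def by blast
      have "s * Z k = HR m' n' r' ys' zs' * PZ (ks' @ [k])" by (simp add: s PZ_snoc mult.assoc)
      also have "\<dots> \<in> GN ?T" using h' lt 3
        by (intro GN_I) (auto simp: sorted_wrt_append)
      finally show "s * Z k \<in> lspan (GN ?T)" by (rule lspan.lb)
    qed
    ultimately show ?thesis using H1[of k j] by (simp add: lspan_diff)
  qed
qed





section \<open>Words of letters\<close>

datatype letter = LYY nat nat | LYZ nat nat | LZ nat

fun ev :: "letter \<Rightarrow> 'k::field R" where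
  "ev (LYY a b) = cYY a b"
| "ev (LYZ a b) = cYZ a b"
| "ev (LZ j) = Z j"

definition evw :: "letter list \<Rightarrow> 'k::field R" where "evw ws = prod_list (map ev ws)"

lemma CoreV:
  assumes two: "(2::'k::field) \<noteq> 0" and g: "g \<in> GN UNIV"
  shows "g * ev l \<in> lspan (GN UNIV :: 'k R set)"
proof -
  obtain m n r ys zs ks where gdef: "g = HR m n r ys zs * PZ ks" and h: "nhc m n r ys zs" and ks: "sorted_wrt (<) ks"
    using g unfolding GN_def by blast
  have l: "length ys = 2*m+n" "length zs = n+2*r" using h by (simp_all add: nhc_def)
  show ?thesis
  proof (cases l)
    case (LZ j)
    have "g * ev l \<in> lspan (GN (insert j (set ks)) :: 'k R set)"
      unfolding gdef LZ using Ins[OF two h ks] by simp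
    then show ?thesis by (rule GN_mono[rotated]) simp
  next
    case (LYY a b)
    have c: "PZ ks * cYY a b = cYY a b * (PZ ks :: 'k R)"
      unfolding PZ_def by (rule comm_prod_list[symmetric]) (auto simp: cYY_Z)
    have "g * ev l = (HR m n r ys zs * cYY a b) * PZ ks" unfolding gdef LYY by (simp add: mult.assoc c)
    also have "\<dots> = HR (Suc m) n r (take (2*m) ys @ a # b # drop (2*m) ys) zs * PZ ks"
      by (subst HR_ext_YY[OF l(1)]) (rule refl)
    also have "\<dots> \<in> lspan (GN UNIV)"
      by (rule NH_PZ[OF sortH[OF two] ks]) (use l in simp_all)
    finally show ?thesis .
  next
    case (LYZ a b)
    have c: "PZ ks * cYZ a b = sgnn (length ks) (cYZ a b * (PZ ks :: 'k R))"
      unfolding PZ_def using acomm_prod_list[of "map Z ks" "cYZ a b"] by (simp add: cYZ_Z)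
    have "g * ev l = sgnn (length ks) ((HR m n r ys zs * cYZ a b) * PZ ks)" unfolding gdef LYZ
      by (simp add: mult.assoc c sgnn_mult_left)
    also have "\<dots> = sgnn (length ks) (HR m (Suc n) r (ys @ [a]) (take n zs @ b # drop n zs) * PZ ks)"
      by (subst HR_ext_YZ[OF l]) (rule refl)
    also have "\<dots> \<in> lspan (GN UNIV)"
      by (rule lspan_sgnn, rule NH_PZ[OF sortH[OF two] ks]) (use l in simp_all)
    finally show ?thesis .
  qed
qed

lemma HR_000: "HR 0 0 0 [] [] = (1 :: 'k::field R)" by (simp add: HR_def)

lemma evw_V:
  assumes two: "(2::'k::field) \<noteq> 0"
  shows "(evw ws :: 'k R) \<in> lspan (GN UNIV)"
proof (induct ws rule: rev_induct)
  case Nil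
  have "(evw [] :: 'k R) = HR 0 0 0 [] [] * PZ []" by (simp add: evw_def HR_000 PZ_def)
  also have "\<dots> \<in> GN UNIV" by (rule GN_I) (simp_all add: nhc_def)
  finally show ?case by (rule lspan.lb)
next
  case (snoc l ws)
  have "(evw (ws @ [l]) :: 'k R) = evw ws * ev l" by (simp add: evw_def)
  also have "\<dots> \<in> lspan (GN UNIV)"
    by (rule lspan_mult_right[OF snoc]) (rule CoreV[OF two])
  finally show ?case .
qed

abbreviation W :: "'k::field R set" where "W \<equiv> lspan (range evw)"

lemma evw_W: "evw ws \<in> W" by (rule lspan.lb) simp

lemma W_mult: "u \<in> W \<Longrightarrow> v \<in> W \<Longrightarrow> u * v \<in> (W :: 'k::field R set)"
proof (erule lspan_mult_right)
  fix s :: "'k R" assume v: "v \<in> W" and "s \<in> range evw"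
  then obtain a where s: "s = evw a" by blast
  show "s * v \<in> W"
  proof (rule lspan_mult_left[OF v])
    fix t :: "'k R" assume "t \<in> range evw"
    then obtain b where t: "t = evw b" by blast
    show "s * t \<in> W" unfolding s t using evw_W[of "a @ b"] by (simp add: evw_def)
  qed
qed

definition VV :: "'k::field R \<Rightarrow> bool" where "VV v \<longleftrightarrow> (\<exists>d. v = Y d) \<or> (\<exists>d. v = Z d)"

lemma cm_letter: "VV v \<Longrightarrow> cm (ev l :: 'k::field R) v \<in> (W :: 'k::field R set)"
proof -
  assume "VV v"
  then consider d where "v = Y d" | d where "v = Z d" unfolding VV_def by blast
  then show ?thesis
  proof cases
    case 1
    show ?thesis
    proof (cases l)
      case (LYY a b)
      have "cm (ev l) v = (0 :: 'k R)" using 1 R1a[of a b d] LYY by (simp add: cYY_def)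
      then show ?thesis by (simp add: lspan.lz)
    next
      case (LYZ a b)
      have "cm (ev l) v = (0 :: 'k R)" using 1 R2[of a b d] LYZ by (simp add: cYZ_def)
      then show ?thesis by (simp add: lspan.lz)
    next
      case (LZ a)
      have "cm (ev l) v = - evw [LYZ d a]" using LZ 1 by (simp add: evw_def cm_ZY)
      then show ?thesis using lspan_neg[OF evw_W] by simp
    qed
  next
    case 2
    show ?thesis
    proof (cases l)
      case (LYY a b)
      have "cm (ev l) v = (0 :: 'k R)" using 2 R1b[of a b d] LYY by (simp add: cYY_def)
      then show ?thesis by (simp add: lspan.lz)
    next
      case (LYZ a b)
      have "cm (ev l) v = evw [LYZ a b, LZ d] + evw [LYZ a b, LZ d]"
        using LYZ 2 by (simp add: evw_def cm_def cYZ_Z)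
      then show ?thesis using lspan.la[OF evw_W evw_W] by simp
    next
      case (LZ a)
      have "cm (ev l) v = evw [LZ a, LZ d] - evw [LZ d, LZ a]"
        using LZ 2 by (simp add: evw_def cm_def)
      then show ?thesis using lspan_diff[OF evw_W evw_W] by simp
    qed
  qed
qed

lemma cm_word: "VV v \<Longrightarrow> cm (evw ws) v \<in> (W :: 'k::field R set)"
proof (induct ws)
  case Nil then show ?case by (simp add: evw_def cm_def lspan.lz)
next
  case (Cons l ws)
  have e: "cm (evw (l # ws)) v = ev l * cm (evw ws) v + cm (ev l) v * evw ws"
    by (simp add: evw_def cm_def algebra_simps)
  have 1: "ev l * cm (evw ws) v \<in> (W :: 'k R set)"
    using W_mult[OF evw_W[of "[l]"] Cons.hyps[OF Cons.prems]] by (simp add: evw_def)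
  have 2: "cm (ev l) v * evw ws \<in> (W :: 'k R set)"
    by (rule W_mult[OF cm_letter[OF Cons.prems] evw_W])
  show ?case unfolding e by (rule lspan.la[OF 1 2])
qed

lemma cm_W: "x \<in> W \<Longrightarrow> VV v \<Longrightarrow> cm x v \<in> (W :: 'k::field R set)"
proof (induct x rule: lspan.induct)
  case lz then show ?case by (simp add: cm_def lspan.lz)
next
  case (lb s) then show ?case using cm_word by blast
next
  case (la u w)
  have "cm (u + w) v = cm u v + cm w v" by (simp add: cm_def algebra_simps)
  then show ?case using la by (simp add: lspan.la)
next
  case (ls u c)
  have "v * (sc c * u) = (v * sc c) * u" by (simp add: mult.assoc)
  also have "\<dots> = sc c * (v * u)" by (simp add: sc_comm mult.assoc)
  finally have vs: "v * (sc c * u) = sc c * (v * u)" .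
  have "cm (sc c * u) v = sc c * cm u v"
    by (simp add: cm_def vs right_diff_distrib mult.assoc)
  then show ?case using ls by (simp add: lspan.ls)
qed





lemma abs_fvar_VV: "VV (abs_R (fvar x) :: 'k::field R)"
  by (cases x) (auto simp: VV_def abs_Y abs_Z)

lemma abs_comm: "abs_R (comm p q) = cm (abs_R p) (abs_R q)"
  by (simp add: comm_eq abs_diff abs_mult cm_def)
lemma abs_jordan: "abs_R (jordan p q) = jd (abs_R p) (abs_R q)"
  by (simp add: jordan_eq abs_add abs_mult jd_def)

lemma lcomm_snoc: "lcomm x (xs @ [w]) = comm (lcomm x xs) (fvar w)"
  by (simp add: lcomm_def)

lemma abs_lcomm: "xs \<noteq> [] \<Longrightarrow> (abs_R (lcomm x xs) :: 'k::field R) \<in> W"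
proof (induct xs rule: rev_induct)
  case Nil then show ?case by simp
next
  case (snoc w xs)
  show ?case
  proof (cases "xs = []")
    case False
    have "(abs_R (lcomm x (xs @ [w])) :: 'k R) = cm (abs_R (lcomm x xs)) (abs_R (fvar w))"
      by (simp add: lcomm_snoc abs_comm)
    also have "\<dots> \<in> W" by (rule cm_W[OF snoc(1)[OF False] abs_fvar_VV])
    finally show ?thesis .
  next
    case True
    have e: "(abs_R (lcomm x (xs @ [w])) :: 'k R) = cm (abs_R (fvar x)) (abs_R (fvar w))"
      using True by (simp add: lcomm_def abs_comm)
    show ?thesis
    proof (cases x)
      case (Yv a)
      show ?thesis
      proof (cases w)
        case (Yv b)
        have "cm (abs_R (fvar x)) (abs_R (fvar w)) = (evw [LYY a b] :: 'k R)"
          using \<open>x = Yv a\<close> Yv by (simp add: evw_def abs_Y cYY_def)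
        then show ?thesis using e evw_W by metis
      next
        case (Zv b)
        have "cm (abs_R (fvar x)) (abs_R (fvar w)) = (evw [LYZ a b] :: 'k R)"
          using \<open>x = Yv a\<close> Zv by (simp add: evw_def abs_Y abs_Z cYZ_def)
        then show ?thesis using e evw_W by metis
      qed
    next
      case (Zv a)
      show ?thesis
      proof (cases w)
        case (Yv b)
        have "cm (abs_R (fvar x)) (abs_R (fvar w)) = - (evw [LYZ b a] :: 'k R)"
          using \<open>x = Zv a\<close> Yv by (simp add: evw_def abs_Y abs_Z cm_ZY)
        then show ?thesis using e lspan_neg[OF evw_W] by metis
      next
        case (Zv b)
        have "cm (abs_R (fvar x)) (abs_R (fvar w)) = evw [LZ a, LZ b] - (evw [LZ b, LZ a] :: 'k R)"
          using \<open>x = Zv a\<close> Zv by (simp add: evw_def abs_Z cm_def)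
        then show ?thesis using e lspan_diff[OF evw_W evw_W] by metis
      qed
    qed
  qed
qed

lemma abs_fsmult: "abs_R (fsmult c p) = sc c * abs_R p"
  by (simp add: fsmult_eq abs_mult sc_def)

lemma Yproper_W: "p \<in> Y_proper \<Longrightarrow> (abs_R p :: 'k::field R) \<in> W"
proof (induct p rule: Y_proper.induct)
  case (const c)
  have "(abs_R (fconst c) :: 'k R) = sc c * evw []" by (simp add: fconst_def sc_def evw_def)
  then show ?case using lspan.ls[OF evw_W] by metis
next
  case (zvar j)
  have "(abs_R (fvar (Zv j)) :: 'k R) = evw [LZ j]" by (simp add: abs_Z evw_def)
  then show ?case using evw_W by metis
next
  case (commutator xs x) then show ?case by (rule abs_lcomm)
next
  case (add p q) then show ?case by (simp add: abs_add lspan.la)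
next
  case (smult p c) then show ?case by (simp add: abs_fsmult lspan.ls)
next
  case (mult p q) then show ?case by (simp add: fmul_eq abs_mult W_mult)
qed

lemma abs_fprod: "abs_R (fprod ps) = prod_list (map abs_R ps)"
  by (induct ps) (simp_all add: fprod_def fone_eq fmul_eq abs_one abs_mult)

lemma fa_eq: "fa ys = (\<lambda>k. cYY (ys!(2*k)) (ys!(2*k+1)))" by (rule ext) (simp add: fa_def)
lemma fb_eq: "fb m ys zs = (\<lambda>k. cYZ (ys!(2*m+k)) (zs!k))" by (rule ext) (simp add: fb_def)
lemma fc_eq: "fc n zs = (\<lambda>k. JZ (zs!(n+2*k)) (zs!(n+2*k+1)))" by (rule ext) (simp add: fc_def)

lemma abs_hpoly: "abs_R (hpoly m n r ys zs) = (HR m n r ys zs :: 'k::field R)"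
  by (simp add: hpoly_def HR_def fmul_eq abs_mult abs_fprod o_def abs_comm abs_jordan
      fa_eq fb_eq fc_eq cYY_def cYZ_def JZ_def Y_def[symmetric] Z_def[symmetric])

lemma abs_gpoly: "abs_R (gpoly m n r ys zs ks) = (HR m n r ys zs * PZ ks :: 'k::field R)"
  by (simp add: gpoly_def fmul_eq abs_mult abs_hpoly abs_fprod o_def PZ_def Z_def[symmetric])

lemma GN_G: "GN UNIV \<subseteq> abs_R ` (G_set :: 'k::field fpoly set)"
proof
  fix x :: "'k R" assume "x \<in> GN UNIV"
  then obtain m n r ys zs ks where x: "x = HR m n r ys zs * PZ ks" and h: "nhc m n r ys zs" and ks: "sorted_wrt (<) ks"
    unfolding GN_def by blast
  have "gpoly m n r ys zs ks \<in> (G_set :: 'k fpoly set)" unfolding G_set_def mem_Collect_eq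
    by (rule exI[of _ m], rule exI[of _ n], rule exI[of _ r], rule exI[of _ ys], rule exI[of _ zs], rule exI[of _ ks])
       (use h ks in \<open>simp add: nhc_def\<close>)
  then show "x \<in> abs_R ` G_set" using x abs_gpoly by (metis image_eqI)
qed

lemma lspan_repr:
  "x \<in> lspan (abs_R ` A) \<Longrightarrow> \<exists>F c. F \<subseteq> A \<and> finite F \<and> x = abs_R (\<Sum>g\<in>F. fsmult (c g) g)"
proof (induct x rule: lspan.induct)
  case lz
  show ?case by (rule exI[of _ "{}"]) (simp add: abs_zero)
next
  case (lb s)
  then obtain g where g: "g \<in> A" "s = abs_R g" by blast
  have "fsmult 1 g = g" by (simp add: fsmult_eq S1_one)
  then show ?case using g by (intro exI[of _ "{g}"] exI[of _ "\<lambda>_. 1"]) simp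
next
  case (la u v)
  then obtain F1 c1 F2 c2 where 1: "F1 \<subseteq> A" "finite F1" "u = abs_R (\<Sum>g\<in>F1. fsmult (c1 g) g)"
    and 2: "F2 \<subseteq> A" "finite F2" "v = abs_R (\<Sum>g\<in>F2. fsmult (c2 g) g)" by blast
  define c where "c g = (if g \<in> F1 then c1 g else 0) + (if g \<in> F2 then c2 g else 0)" for g
  have s1: "(\<Sum>g\<in>F1 \<union> F2. fsmult (if g \<in> F1 then c1 g else 0) g) = (\<Sum>g\<in>F1. fsmult (c1 g) g)"
    by (rule sum.mono_neutral_cong_right) (use 1 2 in \<open>auto simp: fsmult_eq\<close>)
  have s2: "(\<Sum>g\<in>F1 \<union> F2. fsmult (if g \<in> F2 then c2 g else 0) g) = (\<Sum>g\<in>F2. fsmult (c2 g) g)"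
    by (rule sum.mono_neutral_cong_right) (use 1 2 in \<open>auto simp: fsmult_eq\<close>)
  have "(\<Sum>g\<in>F1 \<union> F2. fsmult (c g) g) = (\<Sum>g\<in>F1 \<union> F2. fsmult (if g \<in> F1 then c1 g else 0) g) + (\<Sum>g\<in>F1 \<union> F2. fsmult (if g \<in> F2 then c2 g else 0) g)"
    by (simp add: c_def fsmult_eq S1_add[symmetric] distrib_right sum.distrib)
  then have "u + v = abs_R (\<Sum>g\<in>F1 \<union> F2. fsmult (c g) g)" using 1 2 s1 s2 by (simp add: abs_add)
  then show ?case using 1 2 by (intro exI[of _ "F1 \<union> F2"] exI[of _ c]) simp
next
  case (ls u d)
  then obtain F c where 1: "F \<subseteq> A" "finite F" "u = abs_R (\<Sum>g\<in>F. fsmult (c g) g)" by blast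
  have "sc d * u = abs_R (\<Sum>g\<in>F. fsmult (d * c g) g)"
    unfolding 1 sc_def abs_mult[symmetric]
    by (simp add: fsmult_eq sum_distrib_left mult.assoc[symmetric] S1_mult)
  then show ?case using 1 by (intro exI[of _ F] exI[of _ "\<lambda>g. d * c g"]) simp
qed

theorem mainTheorem5:
  fixes p :: "'k::field fpoly"
  assumes "infinite (UNIV :: 'k set)"
    and "(2::'k) \<noteq> 0"
    and "p \<in> Y_proper"
  shows "\<exists>F c. F \<subseteq> G_set \<and> finite F \<and>
           p - (\<Sum>g\<in>F. fsmult (c g) g) \<in> I_ideal"
proof -
  have "(abs_R p :: 'k R) \<in> W" by (rule Yproper_W[OF assms(3)])
  then have "(abs_R p :: 'k R) \<in> lspan (GN UNIV)"
    by (rule lspan_mono) (auto intro: evw_V[OF assms(2)])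
  then have "(abs_R p :: 'k R) \<in> lspan (abs_R ` G_set)"
    by (rule lspan_mono) (use GN_G lspan.lb in blast)
  then obtain F c where F: "F \<subseteq> G_set" "finite F" "abs_R p = (abs_R (\<Sum>g\<in>F. fsmult (c g) g) :: 'k R)"
    using lspan_repr[of "abs_R p" G_set] by auto
  have "Irel p (\<Sum>g\<in>F. fsmult (c g) g)" using F(3) by (simp add: R.abs_eq_iff)
  then show ?thesis using F(1,2) unfolding Irel_def by (intro exI[of _ F] exI[of _ c]) simp
qed


end
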